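(* (i) Let $G=(V,E)$ be a complete graph on $n\ge 2$ vertices with distinct positive edge weights, and let $k\in\{1,\dots,n-1\}$. Then the graph $(V,M_k(G))$ is $k$-constructible. (ii) Let $G=(V,E)$ be a $k$-constructible graph. Then there exist distinct positive edge weights on the complete graph $\widetilde G=(V,\widetilde E)$ on vertex set $V$ such that $E\subseteq M_k(\widetilde G)$.
   Context: For a complete graph $H=(V,F)$ on $n$ vertices with distinct positive edge weights and $k\in\{1,\dots,n-1\}$, $M_k(H)=\bigcup_{X\subseteq V,\,|X|=k-1}\mathrm{MST}(H[V\setminus X])$, where $H[V\setminus X]$ is the induced weighted subgraph and $\mathrm{MST}$ denotes the edge set of its (unique) minimum spanning tree. A graph $G=(V,E)$ is called $k$-constructible if there is an ordering $e_1,\dots,e_m$ of $E$ such that for every $i\in\{1,\dots,m\}$ the graph $(V,\{e_1,\dots,e_{i-1}\})$ contains at most $k-1$ internally vertex-disjoint paths between the two endpoints of $e_i$. *)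

theory Defs
  imports Complex_Main
begin

definition all_edges :: "'a set \<Rightarrow> 'a set set" where
  "all_edges U = {e. e \<subseteq> U \<and> card e = 2}"

definition adj :: "'a set set \<Rightarrow> 'a \<Rightarrow> 'a \<Rightarrow> bool" where
  "adj F x y \<longleftrightarrow> x \<noteq> y \<and> {x, y} \<in> F"

definition connected_graph :: "'a set \<Rightarrow> 'a set set \<Rightarrow> bool" where
  "connected_graph U F \<longleftrightarrow> (\<forall>x\<in>U. \<forall>y\<in>U. (adj F)\<^sup>*\<^sup>* x y)"

text \<open>A spanning tree of the complete graph on U: a connected spanning subgraph
  that is acyclic, i.e. no edge lies on a cycle (removing any edge disconnects it).\<close>
definition spanning_tree :: "'a set \<Rightarrow> 'a set set \<Rightarrow> bool" where
  "spanning_tree U T \<longleftrightarrow> T \<subseteq> all_edges U \<and> connected_graph U T \<and>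
     (\<forall>e\<in>T. \<not> connected_graph U (T - {e}))"

definition is_mst :: "('a set \<Rightarrow> real) \<Rightarrow> 'a set \<Rightarrow> 'a set set \<Rightarrow> bool" where
  "is_mst w U T \<longleftrightarrow> spanning_tree U T \<and>
     (\<forall>T'. spanning_tree U T' \<longrightarrow> sum w T \<le> sum w T')"

text \<open>The (unique, for distinct weights) minimum spanning tree of the induced
  weighted subgraph H[U].\<close>
definition MST :: "('a set \<Rightarrow> real) \<Rightarrow> 'a set \<Rightarrow> 'a set set" where
  "MST w U = (THE T. is_mst w U T)"

definition M :: "nat \<Rightarrow> 'a set \<Rightarrow> ('a set \<Rightarrow> real) \<Rightarrow> 'a set set" where
  "M k V w = (\<Union>X \<in> {X. X \<subseteq> V \<and> card X = k - 1}. MST w (V - X))"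

definition distinct_pos_weights :: "'a set \<Rightarrow> ('a set \<Rightarrow> real) \<Rightarrow> bool" where
  "distinct_pos_weights V w \<longleftrightarrow> inj_on w (all_edges V) \<and> (\<forall>e\<in>all_edges V. 0 < w e)"

definition is_path :: "'a set set \<Rightarrow> 'a \<Rightarrow> 'a \<Rightarrow> 'a list \<Rightarrow> bool" where
  "is_path F u v p \<longleftrightarrow> length p \<ge> 2 \<and> hd p = u \<and> last p = v \<and> distinct p \<and>
     (\<forall>i. Suc i < length p \<longrightarrow> {p ! i, p ! Suc i} \<in> F)"

definition internal :: "'a list \<Rightarrow> 'a set" where
  "internal p = set (butlast (tl p))"

definition int_disjoint_paths :: "'a set set \<Rightarrow> 'a \<Rightarrow> 'a \<Rightarrow> 'a list set \<Rightarrow> bool" where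
  "int_disjoint_paths F u v P \<longleftrightarrow> (\<forall>p\<in>P. is_path F u v p) \<and>
     (\<forall>p\<in>P. \<forall>q\<in>P. p \<noteq> q \<longrightarrow> internal p \<inter> internal q = {})"

definition at_most_disjoint_paths :: "'a set set \<Rightarrow> 'a \<Rightarrow> 'a \<Rightarrow> nat \<Rightarrow> bool" where
  "at_most_disjoint_paths F u v m \<longleftrightarrow>
     (\<forall>P. finite P \<and> int_disjoint_paths F u v P \<longrightarrow> card P \<le> m)"

definition k_constructible :: "nat \<Rightarrow> 'a set \<Rightarrow> 'a set set \<Rightarrow> bool" where
  "k_constructible k V E \<longleftrightarrow> (\<exists>es. distinct es \<and> set es = E \<and>
     (\<forall>i < length es. \<forall>u v. es ! i = {u, v} \<and> u \<noteq> v \<longrightarrow>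
        at_most_disjoint_paths (set (take i es)) u v (k - 1)))"

end

theory Submission
  imports Defs
begin

lemma adj_sym: "adj F x y \<Longrightarrow> adj F y x"
  by (auto simp: adj_def insert_commute)

lemma rt_sym: "(adj F)\<^sup>*\<^sup>* x y \<Longrightarrow> (adj F)\<^sup>*\<^sup>* y x"
  by (induction rule: rtranclp_induct) (auto intro: converse_rtranclp_into_rtranclp adj_sym)

lemma rt_lift: assumes "\<And>x y. R x y \<Longrightarrow> S\<^sup>*\<^sup>* x y" and "R\<^sup>*\<^sup>* a b"
  shows "S\<^sup>*\<^sup>* a b"
  using assms(2) by (induction rule: rtranclp_induct) (auto intro: rtranclp_trans assms(1))

lemma adj_mono: "F \<subseteq> G \<Longrightarrow> adj F x y \<Longrightarrow> adj G x y"
  by (auto simp: adj_def)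

lemma rt_mono: "F \<subseteq> G \<Longrightarrow> (adj F)\<^sup>*\<^sup>* x y \<Longrightarrow> (adj G)\<^sup>*\<^sup>* x y"
  by (metis adj_mono mono_rtranclp)

lemma rt_split:
  assumes "(adj (insert e G))\<^sup>*\<^sup>* a b" "e = {x, y}"
  shows "(adj G)\<^sup>*\<^sup>* a b \<or> ((adj G)\<^sup>*\<^sup>* a x \<and> (adj G)\<^sup>*\<^sup>* y b) \<or> ((adj G)\<^sup>*\<^sup>* a y \<and> (adj G)\<^sup>*\<^sup>* x b)"
  using assms(1)
proof (induction rule: rtranclp_induct)
  case base thus ?case by simp
next
  case (step t t')
  show ?case
  proof (cases "adj G t t'")
    case True
    with step.IH show ?thesis by (meson rtranclp.rtrancl_into_rtrancl)
  next
    case False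
    with step.hyps(2) assms(2) have "{t, t'} = {x, y}" by (auto simp: adj_def)
    hence "(t = x \<and> t' = y) \<or> (t = y \<and> t' = x)" by (auto simp: doubleton_eq_iff)
    with step.IH show ?thesis by auto
  qed
qed

lemma rt_cross:
  assumes "R\<^sup>*\<^sup>* a b" "P a" "\<not> P b"
  shows "\<exists>x y. R x y \<and> P x \<and> \<not> P y"
  using assms by (induction rule: rtranclp_induct) auto

lemma card2_neq: "card {a, b} = 2 \<Longrightarrow> a \<noteq> b"
  by (cases "a = b") auto

lemma finite_all_edges: "finite U \<Longrightarrow> finite (all_edges U)"
  by (rule finite_subset[of _ "Pow U"]) (auto simp: all_edges_def)

lemma all_edges_mono: "U \<subseteq> U' \<Longrightarrow> all_edges U \<subseteq> all_edges U'"
  by (auto simp: all_edges_def)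

lemma all_edges_pair: "e \<in> all_edges U \<Longrightarrow> \<exists>a b. a \<noteq> b \<and> e = {a, b} \<and> a \<in> U \<and> b \<in> U"
  by (auto simp: all_edges_def card_2_iff)

lemma pair_all_edges: "a \<noteq> b \<Longrightarrow> a \<in> U \<Longrightarrow> b \<in> U \<Longrightarrow> {a, b} \<in> all_edges U"
  by (auto simp: all_edges_def)

lemma connected_mono: "connected_graph U F \<Longrightarrow> F \<subseteq> G \<Longrightarrow> connected_graph U G"
  by (auto simp: connected_graph_def intro: rt_mono)

lemma extract_tree:
  assumes "finite U" "F \<subseteq> all_edges U" "connected_graph U F"
  shows "\<exists>T \<subseteq> F. spanning_tree U T"
  using assms(2,3)
proof (induction "card F" arbitrary: F rule: less_induct)
  case less
  have fin: "finite F" using less.prems(1) finite_all_edges[OF assms(1)] finite_subset by blast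
  show ?case
  proof (cases "\<exists>e\<in>F. connected_graph U (F - {e})")
    case True
    then obtain e where e: "e \<in> F" "connected_graph U (F - {e})" by blast
    have "card (F - {e}) < card F" using e(1) fin by (meson card_Diff1_less)
    from less.hyps[OF this _ e(2)] less.prems show ?thesis by blast
  next
    case False
    thus ?thesis using less.prems by (auto simp: spanning_tree_def)
  qed
qed

definition light :: "('a set \<Rightarrow> real) \<Rightarrow> 'a set \<Rightarrow> 'a set \<Rightarrow> 'a set set" where
  "light w U e = {f \<in> all_edges U. w f < w e}"

definition Lset :: "('a set \<Rightarrow> real) \<Rightarrow> 'a set \<Rightarrow> 'a set set" where
  "Lset w U = {e \<in> all_edges U. \<forall>a b. e = {a, b} \<longrightarrow> \<not> (adj (light w U e))\<^sup>*\<^sup>* a b}"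

locale wsetup =
  fixes w :: "'a set \<Rightarrow> real" and U :: "'a set"
  assumes finU: "finite U" and injw: "inj_on w (all_edges U)"
    and posw: "\<And>e. e \<in> all_edges U \<Longrightarrow> 0 < w e"
begin

lemma Lset_D: "e \<in> Lset w U \<Longrightarrow> e = {a, b} \<Longrightarrow> \<not> (adj (light w U e))\<^sup>*\<^sup>* a b"
  unfolding Lset_def by blast

lemma Lset_sub: "Lset w U \<subseteq> all_edges U" by (auto simp: Lset_def)

lemma L_connected_edge:
  assumes "e \<in> all_edges U"
  shows "\<forall>a b. e = {a, b} \<longrightarrow> (adj (Lset w U))\<^sup>*\<^sup>* a b"
  using assms
proof (induction "card (light w U e)" arbitrary: e rule: less_induct)
  case less
  show ?case
  proof (cases "e \<in> Lset w U")
    case True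
    show ?thesis
    proof (intro allI impI)
      fix a b assume ab: "e = {a, b}"
      hence "a \<noteq> b" using less.prems by (auto simp: all_edges_def)
      hence "adj (Lset w U) a b" using ab True by (simp add: adj_def)
      thus "(adj (Lset w U))\<^sup>*\<^sup>* a b" by blast
    qed
  next
    case False
    then obtain a' b' where ab': "e = {a', b'}" "(adj (light w U e))\<^sup>*\<^sup>* a' b'"
      using less.prems by (auto simp: Lset_def)
    have "(adj (Lset w U))\<^sup>*\<^sup>* x y" if "adj (light w U e) x y" for x y
    proof -
      from that have f: "{x, y} \<in> all_edges U" "w {x, y} < w e" by (auto simp: adj_def light_def)
      have sub1: "light w U {x, y} \<subseteq> light w U e"
        using f(2) unfolding light_def by auto
      have sub2: "{x, y} \<in> light w U e" "{x, y} \<notin> light w U {x, y}"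
        using f unfolding light_def by auto
      have sub: "light w U {x, y} \<subset> light w U e" using sub1 sub2 by blast
      have "finite (light w U e)" using finite_all_edges[OF finU]
        by (auto simp: light_def)
      hence cl: "card (light w U {x, y}) < card (light w U e)" using sub by (meson psubset_card_mono)
      have "\<forall>a b. {x, y} = {a, b} \<longrightarrow> (adj (Lset w U))\<^sup>*\<^sup>* a b" by (rule less.hyps[OF cl f(1)])
      thus ?thesis by (elim allE[of _ x] allE[of _ y]) simp
    qed
    hence r: "(adj (Lset w U))\<^sup>*\<^sup>* a' b'" using ab'(2) by (rule rt_lift)
    show ?thesis
    proof (intro allI impI)
      fix a b assume ab: "e = {a, b}"
      have "{a, b} = {a', b'}" using ab ab'(1) by simp
      hence "(a = a' \<and> b = b') \<or> (a = b' \<and> b = a')" by (simp only: doubleton_eq_iff)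
      thus "(adj (Lset w U))\<^sup>*\<^sup>* a b" using r rt_sym by (elim disjE conjE) simp_all
    qed
  qed
qed

lemma L_connected: "connected_graph U (Lset w U)"
  unfolding connected_graph_def
proof (intro ballI)
  fix x y assume xy: "x \<in> U" "y \<in> U"
  show "(adj (Lset w U))\<^sup>*\<^sup>* x y"
  proof (cases "x = y")
    case False
    hence "{x, y} \<in> all_edges U" using xy by (rule pair_all_edges)
    thus ?thesis using L_connected_edge by blast
  qed simp
qed

lemma L_minimal:
  assumes e: "e \<in> Lset w U" "e = {u, v}"
  shows "\<not> (adj (Lset w U - {e}))\<^sup>*\<^sup>* u v"
proof -
  have eU: "e \<in> all_edges U" using e(1) Lset_sub by blast
  hence "card e = 2" by (simp add: all_edges_def)
  hence uv: "u \<noteq> v" unfolding e(2) by (rule card2_neq)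
  have "\<forall>A. A \<subseteq> Lset w U - {e} \<longrightarrow> \<not> (adj A)\<^sup>*\<^sup>* u v"
  proof (intro allI)
    fix A show "A \<subseteq> Lset w U - {e} \<longrightarrow> \<not> (adj A)\<^sup>*\<^sup>* u v"
    proof (induction "card A" arbitrary: A rule: less_induct)
      case less
      show ?case
      proof (intro impI notI)
        assume A: "A \<subseteq> Lset w U - {e}" and r: "(adj A)\<^sup>*\<^sup>* u v"
        have AU: "A \<subseteq> all_edges U" using A Lset_sub by (meson Diff_subset subset_trans)
        have finA: "finite A" using AU finite_all_edges[OF finU] by (rule finite_subset)
        show False
        proof (cases "A = {}")
          case True
          from r True have "u = v" by (induction rule: rtranclp_induct) (simp_all add: adj_def)
          with uv show False by simp
        next
          case False
          have mx: "Max (w ` A) \<in> w ` A" using finA False by simp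
          then obtain f where f1: "f \<in> A" "w f = Max (w ` A)" by auto
          have f2: "w g \<le> w f" if "g \<in> A" for g using f1(2) finA that by simp
          note f = f1(1) f2
          obtain a b where ab: "a \<noteq> b" "f = {a, b}" using all_edges_pair f(1) AU by blast
          have cardlt: "card (A - {f}) < card A" using f(1) finA by (meson card_Diff1_less)
          from less.hyps[OF cardlt] A have nr: "\<not> (adj (A - {f}))\<^sup>*\<^sup>* u v" by blast
          have iA: "insert f (A - {f}) = A" using f(1) by blast
          have "(adj (insert f (A - {f})))\<^sup>*\<^sup>* u v" using r by (simp only: iA)
          from rt_split[OF this ab(2)] nr
          have sp: "((adj (A - {f}))\<^sup>*\<^sup>* u a \<and> (adj (A - {f}))\<^sup>*\<^sup>* b v) \<or>
                    ((adj (A - {f}))\<^sup>*\<^sup>* u b \<and> (adj (A - {f}))\<^sup>*\<^sup>* a v)" by blast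
          have fe: "f \<noteq> e" using f(1) A by auto
          have "w f \<noteq> w e" using fe injw f(1) AU eU by (meson inj_on_contraD subsetD)
          show False
          proof (cases "w f < w e")
            case True
            have "A \<subseteq> light w U e" using AU f(2) True by (force simp: light_def)
            hence "(adj (light w U e))\<^sup>*\<^sup>* u v" using r by (rule rt_mono)
            thus False using Lset_D[OF e(1) e(2)] by simp
          next
            case False
            hence lt: "w e < w f" using \<open>w f \<noteq> w e\<close> by auto
            have sub: "insert e (A - {f}) \<subseteq> light w U f"
            proof
              fix g assume "g \<in> insert e (A - {f})"
              then show "g \<in> light w U f"
              proof
                assume "g = e" thus ?thesis using lt eU by (auto simp: light_def)
              next
                assume g: "g \<in> A - {f}"
                have "g \<noteq> f" "g \<in> all_edges U" "f \<in> all_edges U" using g AU f(1) by auto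
                hence "w g \<noteq> w f" using injw by (meson inj_on_contraD)
                with f(2) g have "w g < w f" by force
                thus ?thesis using g AU by (auto simp: light_def)
              qed
            qed
            let ?R = "(adj (light w U f))\<^sup>*\<^sup>*"
            have subA: "A - {f} \<subseteq> light w U f" using sub by blast
            have m: "(adj (A - {f}))\<^sup>*\<^sup>* p q \<Longrightarrow> ?R p q" for p q
              by (rule rt_mono[OF subA])
            have "e \<in> light w U f" using sub by blast
            hence "adj (light w U f) u v" using uv unfolding e(2) adj_def by simp
            hence uv': "?R u v" by (rule r_into_rtranclp)
            have vu': "?R v u" using uv' by (rule rt_sym)
            from sp have "?R a b"
            proof
              assume h: "(adj (A - {f}))\<^sup>*\<^sup>* u a \<and> (adj (A - {f}))\<^sup>*\<^sup>* b v"
              have "?R a u" using m[OF conjunct1[OF h]] by (rule rt_sym)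
              moreover have "?R v b" using m[OF conjunct2[OF h]] by (rule rt_sym)
              ultimately show ?thesis using uv' by (meson rtranclp_trans)
            next
              assume h: "(adj (A - {f}))\<^sup>*\<^sup>* u b \<and> (adj (A - {f}))\<^sup>*\<^sup>* a v"
              have "?R a v" using m[OF conjunct2[OF h]] .
              moreover have "?R u b" using m[OF conjunct1[OF h]] .
              ultimately show ?thesis using vu' by (meson rtranclp_trans)
            qed
            moreover have "f \<in> Lset w U" using f(1) A by blast
            ultimately show False using Lset_D[OF _ ab(2)] by blast
          qed
        qed
      qed
    qed
  qed
  thus ?thesis by blast
qed

lemma L_tree: "spanning_tree U (Lset w U)"
  unfolding spanning_tree_def
proof (intro conjI ballI)
  show "Lset w U \<subseteq> all_edges U" by (rule Lset_sub)
  show "connected_graph U (Lset w U)" by (rule L_connected)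
  fix e assume e: "e \<in> Lset w U"
  then obtain u v where uv: "e = {u, v}" "u \<in> U" "v \<in> U"
    using Lset_sub all_edges_pair by blast
  show "\<not> connected_graph U (Lset w U - {e})"
  proof
    assume "connected_graph U (Lset w U - {e})"
    hence "(adj (Lset w U - {e}))\<^sup>*\<^sup>* u v" using uv(2,3) unfolding connected_graph_def by blast
    thus False using L_minimal[OF e uv(1)] by simp
  qed
qed

end

context wsetup begin

lemma sum_sub_le: "T' \<subseteq> all_edges U \<Longrightarrow> T'' \<subseteq> T' \<Longrightarrow> sum w T'' \<le> sum w T'"
proof -
  assume a: "T' \<subseteq> all_edges U" "T'' \<subseteq> T'"
  have fin: "finite T'" using a(1) finite_all_edges[OF finU] by (rule finite_subset)
  have "\<forall>x\<in>T' - T''. 0 \<le> w x" using a posw by (meson DiffD1 less_imp_le subsetD)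
  thus ?thesis using sum_mono2[OF fin a(2)] by blast
qed

lemma mst_sub:
  assumes mst: "is_mst w U T"
  shows "T \<subseteq> Lset w U"
proof
  fix e assume eT: "e \<in> T"
  have st: "spanning_tree U T" using mst by (simp add: is_mst_def)
  have TU: "T \<subseteq> all_edges U" using st by (simp add: spanning_tree_def)
  have conT: "connected_graph U T" using st by (simp add: spanning_tree_def)
  have ncon: "\<not> connected_graph U (T - {e})" using st eT by (simp add: spanning_tree_def)
  have eU: "e \<in> all_edges U" using TU eT by blast
  show "e \<in> Lset w U"
  proof (rule ccontr)
    assume "e \<notin> Lset w U"
    then obtain a b where ab: "e = {a, b}" "(adj (light w U e))\<^sup>*\<^sup>* a b"
      using eU unfolding Lset_def by blast
    have abU: "a \<in> U" "b \<in> U" using eU unfolding ab(1) all_edges_def by auto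
    let ?R = "(adj (T - {e}))\<^sup>*\<^sup>*"
    have iT: "insert e (T - {e}) = T" using eT by blast
    have nab: "\<not> ?R a b"
    proof
      assume Rab: "?R a b"
      have stp: "?R x y" if "adj T x y" for x y
      proof (cases "{x, y} = e")
        case True
        hence "(x = a \<and> y = b) \<or> (x = b \<and> y = a)" unfolding ab(1) by (simp only: doubleton_eq_iff)
        thus ?thesis using Rab rt_sym by (elim disjE conjE) simp_all
      next
        case False
        hence "adj (T - {e}) x y" using that by (simp add: adj_def)
        thus ?thesis by (rule r_into_rtranclp)
      qed
      have "connected_graph U (T - {e})" unfolding connected_graph_def
      proof (intro ballI)
        fix p q assume "p \<in> U" "q \<in> U"
        hence "(adj T)\<^sup>*\<^sup>* p q" using conT unfolding connected_graph_def by blast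
        thus "?R p q" using stp by (rule rt_lift[rotated])
      qed
      thus False using ncon by simp
    qed
    have side: "?R a z \<or> ?R b z" if "z \<in> U" for z
    proof -
      have "(adj T)\<^sup>*\<^sup>* a z" using conT abU(1) that unfolding connected_graph_def by blast
      hence "(adj (insert e (T - {e})))\<^sup>*\<^sup>* a z" by (simp only: iT)
      from rt_split[OF this ab(1)] show ?thesis by blast
    qed
    from rt_cross[OF ab(2), of "?R a"] nab
    obtain x y where xy: "adj (light w U e) x y" "?R a x" "\<not> ?R a y" by auto
    define f where "f = {x, y}"
    have fl: "f \<in> light w U e" "x \<noteq> y" using xy(1) unfolding f_def adj_def by auto
    have fU: "f \<in> all_edges U" and wf: "w f < w e" using fl unfolding light_def by auto
    have yU: "y \<in> U" using fU unfolding f_def all_edges_def by auto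
    have Rby: "?R b y" using side[OF yU] xy(3) by blast
    have fe: "f \<noteq> e" using wf by auto
    have fT: "f \<notin> T"
    proof
      assume "f \<in> T"
      hence "adj (T - {e}) x y" using fe fl(2) unfolding f_def adj_def by simp
      hence "?R a y" using xy(2) by (meson rtranclp.rtrancl_into_rtrancl)
      thus False using xy(3) by simp
    qed
    define T' where "T' = insert f (T - {e})"
    let ?R' = "(adj T')\<^sup>*\<^sup>*"
    have T'U: "T' \<subseteq> all_edges U" using TU fU unfolding T'_def by blast
    have sT: "T - {e} \<subseteq> T'" unfolding T'_def by blast
    have Rm: "?R p q \<Longrightarrow> ?R' p q" for p q by (rule rt_mono[OF sT])
    have "adj T' x y" using fl(2) unfolding T'_def f_def adj_def by simp
    hence R'xy: "?R' x y" by (rule r_into_rtranclp)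
    have R'ab: "?R' a b"
    proof -
      have "?R' a x" using Rm[OF xy(2)] .
      moreover have "?R' y b" using Rm[OF Rby] by (rule rt_sym)
      ultimately show ?thesis using R'xy by (meson rtranclp_trans)
    qed
    have stp2: "?R' p q" if "adj T p q" for p q
    proof (cases "{p, q} = e")
      case True
      hence "(p = a \<and> q = b) \<or> (p = b \<and> q = a)" unfolding ab(1) by (simp only: doubleton_eq_iff)
      thus ?thesis using R'ab rt_sym by (elim disjE conjE) simp_all
    next
      case False
      hence "adj T' p q" using that unfolding T'_def adj_def by simp
      thus ?thesis by (rule r_into_rtranclp)
    qed
    have conT': "connected_graph U T'" unfolding connected_graph_def
    proof (intro ballI)
      fix p q assume "p \<in> U" "q \<in> U"
      hence "(adj T)\<^sup>*\<^sup>* p q" using conT unfolding connected_graph_def by blast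
      thus "?R' p q" using stp2 by (rule rt_lift[rotated])
    qed
    obtain T'' where T'': "T'' \<subseteq> T'" "spanning_tree U T''"
      using extract_tree[OF finU T'U conT'] by blast
    have finT: "finite T" using TU finite_all_edges[OF finU] by (rule finite_subset)
    have s1: "sum w T = w e + sum w (T - {e})" using finT eT by (simp add: sum.remove)
    have s2: "sum w T' = w f + sum w (T - {e})" unfolding T'_def using finT fT
      by (simp add: sum.insert_remove)
    have "sum w T'' \<le> sum w T'" using sum_sub_le[OF T'U T''(1)] .
    also have "\<dots> < sum w T" using s1 s2 wf by simp
    finally have "sum w T'' < sum w T" .
    moreover have "sum w T \<le> sum w T''" using mst T''(2) unfolding is_mst_def by blast
    ultimately show False by simp
  qed
qed

lemma L_is_unique_mst: "is_mst w U (Lset w U)" "is_mst w U T \<Longrightarrow> T = Lset w U"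
proof -
  have eq: "T = Lset w U" if mT: "is_mst w U T" for T
  proof (rule ccontr)
    assume ne: "T \<noteq> Lset w U"
    have sub: "T \<subseteq> Lset w U" by (rule mst_sub[OF mT])
    then obtain e where e: "e \<in> Lset w U" "e \<notin> T" using ne by blast
    have "T \<subseteq> Lset w U - {e}" using sub e(2) by blast
    moreover have "connected_graph U T" using mT unfolding is_mst_def spanning_tree_def by blast
    ultimately have "connected_graph U (Lset w U - {e})" using connected_mono by blast
    thus False using L_tree e(1) unfolding spanning_tree_def by blast
  qed
  let ?S = "{T. spanning_tree U T}"
  have finS: "finite ?S"
  proof (rule finite_subset[of _ "Pow (all_edges U)"])
    show "?S \<subseteq> Pow (all_edges U)" unfolding spanning_tree_def by blast
    show "finite (Pow (all_edges U))" using finite_all_edges[OF finU] by simp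
  qed
  have neS: "?S \<noteq> {}" using L_tree by blast
  have fin2: "finite (sum w ` ?S)" using finS by (rule finite_imageI)
  have "Min (sum w ` ?S) \<in> sum w ` ?S" using fin2 neS by (intro Min_in) auto
  then obtain T0 where T0c: "Min (sum w ` ?S) = sum w T0" "T0 \<in> ?S" by (rule imageE)
  have T0a: "T0 \<in> ?S" "sum w T0 = Min (sum w ` ?S)" using T0c by simp_all
  have T0b: "sum w T0 \<le> sum w T" if "T \<in> ?S" for T
    unfolding T0a(2) using fin2 that by (intro Min_le) auto
  note T0 = T0a(1) T0b
  have "is_mst w U T0" using T0 unfolding is_mst_def by blast
  hence "T0 = Lset w U" by (rule eq)
  with \<open>is_mst w U T0\<close> show "is_mst w U (Lset w U)" by simp
  show "is_mst w U T \<Longrightarrow> T = Lset w U" by (rule eq)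
qed

lemma MST_eq: "MST w U = Lset w U"
  unfolding MST_def using L_is_unique_mst by (rule the_equality) 

end

lemma wsetup_sub:
  assumes "finite V" "distinct_pos_weights V w" "U \<subseteq> V"
  shows "wsetup w U"
proof
  show "finite U" using assms(1,3) by (rule finite_subset[rotated])
  have s: "all_edges U \<subseteq> all_edges V" using assms(3) by (rule all_edges_mono)
  show "inj_on w (all_edges U)" using assms(2) s unfolding distinct_pos_weights_def
    by (meson inj_on_subset)
  show "\<And>e. e \<in> all_edges U \<Longrightarrow> 0 < w e" using assms(2) s unfolding distinct_pos_weights_def
    by blast
qed

lemma MST_sub:
  assumes "finite V" "distinct_pos_weights V w" "U \<subseteq> V"
  shows "MST w U = Lset w U" "MST w U \<subseteq> all_edges V"
proof -
  interpret wsetup w U by (rule wsetup_sub[OF assms])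
  show "MST w U = Lset w U" by (rule MST_eq)
  show "MST w U \<subseteq> all_edges V" using MST_eq Lset_sub all_edges_mono[OF assms(3)] by blast
qed

lemma M_sub:
  assumes "finite V" "distinct_pos_weights V w"
  shows "M k V w \<subseteq> all_edges V"
  unfolding M_def using MST_sub(2)[OF assms] by blast

lemma path_set:
  assumes "length p \<ge> 2"
  shows "set p = insert (hd p) (insert (last p) (internal p))"
proof -
  have ne1: "p \<noteq> []" using assms by auto
  have ne2: "tl p \<noteq> []" using assms by (cases p) auto
  note ne = ne1 ne2
  have l: "last (tl p) = last p" using ne by (simp add: last_tl)
  have "p = hd p # tl p" using ne by simp
  moreover have "tl p = butlast (tl p) @ [last (tl p)]" using ne by simp
  ultimately have "p = hd p # butlast (tl p) @ [last p]" using l by metis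
  hence "set p = set (hd p # butlast (tl p) @ [last p])" by simp
  thus ?thesis unfolding internal_def by auto
qed

lemma path_walk:
  assumes "is_path F u v p" "\<And>i. Suc i < length p \<Longrightarrow> R (p ! i) (p ! Suc i)"
  shows "R\<^sup>*\<^sup>* u v"
proof -
  have ne: "p \<noteq> []" using assms(1) unfolding is_path_def by auto
  have "\<forall>j. j < length p \<longrightarrow> R\<^sup>*\<^sup>* (p ! 0) (p ! j)"
  proof
    fix j show "j < length p \<longrightarrow> R\<^sup>*\<^sup>* (p ! 0) (p ! j)"
    proof (induction j)
      case (Suc j)
      show ?case
      proof
        assume "Suc j < length p"
        hence "R\<^sup>*\<^sup>* (p ! 0) (p ! j)" "R (p ! j) (p ! Suc j)" using Suc assms(2) by auto
        thus "R\<^sup>*\<^sup>* (p ! 0) (p ! Suc j)" by (rule rtranclp.rtrancl_into_rtrancl)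
      qed
    qed simp
  qed
  hence "R\<^sup>*\<^sup>* (p ! 0) (p ! (length p - 1))" using ne by simp
  moreover have "p ! 0 = u" "p ! (length p - 1) = v" using assms(1) ne unfolding is_path_def
    by (auto simp: hd_conv_nth last_conv_nth)
  ultimately show ?thesis by simp
qed

lemma pigeon:
  assumes "finite X" "finite P" "\<forall>p\<in>P. \<forall>q\<in>P. p \<noteq> q \<longrightarrow> internal p \<inter> internal q = {}"
    "card X < card P"
  shows "\<exists>p\<in>P. internal p \<inter> X = {}"
proof (rule ccontr)
  assume "\<not> ?thesis"
  hence ne: "\<forall>p\<in>P. internal p \<inter> X \<noteq> {}" by blast
  define g where "g p = (SOME z. z \<in> internal p \<inter> X)" for p
  have g: "g p \<in> internal p \<inter> X" if "p \<in> P" for p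
    unfolding g_def using ne that by (metis (no_types, lifting) ex_in_conv someI_ex)
  have "inj_on g P"
  proof (rule inj_onI)
    fix p q assume pq: "p \<in> P" "q \<in> P" "g p = g q"
    have "g p \<in> internal p" "g p \<in> internal q" using g[OF pq(1)] g[OF pq(2)] pq(3) by auto
    hence "internal p \<inter> internal q \<noteq> {}" by blast
    thus "p = q" using assms(3) pq(1,2) by blast
  qed
  moreover have "g ` P \<subseteq> X" using g by blast
  ultimately have "card P \<le> card X" using assms(1) by (meson card_inj_on_le)
  thus False using assms(4) by simp
qed

lemma sorted_take_less:
  assumes "sorted_wrt (<) (ws :: real list)" "i < length ws" "x \<in> set (take i ws)"
  shows "x < ws ! i"
proof -
  obtain j where j: "j < length (take i ws)" "x = take i ws ! j" using assms(3) by (metis in_set_conv_nth)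
  hence "j < i" "x = ws ! j" by auto
  thus ?thesis using assms(1,2) by (simp add: sorted_wrt_iff_nth_less)
qed

theorem part1:
  assumes finV: "finite V" and dw: "distinct_pos_weights V w"
  shows "k_constructible k V (M k V w)"
proof -
  let ?M = "M k V w"
  have MV: "?M \<subseteq> all_edges V" by (rule M_sub[OF finV dw])
  have injM: "inj_on w ?M" using dw MV unfolding distinct_pos_weights_def by (meson inj_on_subset)
  have finM: "finite ?M" using MV finite_all_edges[OF finV] by (rule finite_subset)
  define ws where "ws = sorted_list_of_set (w ` ?M)"
  define h where "h = the_inv_into ?M w"
  define es where "es = map h ws"
  have sws: "sorted_wrt (<) ws" unfolding ws_def by (rule strict_sorted_list_of_set)
  have setws: "set ws = w ` ?M" unfolding ws_def using finM by simp
  have hM: "h x \<in> ?M" "w (h x) = x" if "x \<in> set ws" for x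
    using that setws injM unfolding h_def by (auto intro: the_inv_into_into f_the_inv_into_f)
  have seteq: "set es = ?M"
  proof
    show "set es \<subseteq> ?M" unfolding es_def using hM by auto
    show "?M \<subseteq> set es"
    proof
      fix e assume eM: "e \<in> ?M"
      have "w e \<in> set ws" using setws eM by simp
      moreover have "h (w e) = e" unfolding h_def by (rule the_inv_into_f_f[OF injM eM])
      ultimately show "e \<in> set es" unfolding es_def by force
    qed
  qed
  have dws: "distinct ws" unfolding ws_def by simp
  have injh: "inj_on h (set ws)"
  proof (rule inj_onI)
    fix x y assume "x \<in> set ws" "y \<in> set ws" "h x = h y"
    thus "x = y" using hM by metis
  qed
  have des: "distinct es" unfolding es_def using dws injh by (simp add: distinct_map)
  show ?thesis unfolding k_constructible_def
  proof (intro exI conjI allI impI)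
    show "distinct es" by (rule des)
    show "set es = ?M" by (rule seteq)
    fix i u v assume i: "i < length es" and uv: "es ! i = {u, v} \<and> u \<noteq> v"
    define e where "e = es ! i"
    have ilw: "i < length ws" using i unfolding es_def by simp
    have we: "w e = ws ! i" unfolding e_def es_def using hM ilw by simp
    have eM: "e \<in> ?M" using seteq i unfolding e_def by (metis nth_mem)
    have light_take: "g \<in> ?M \<and> w g < w e" if gt: "g \<in> set (take i es)" for g
    proof -
      have "take i es = map h (take i ws)" unfolding es_def by (simp add: take_map)
      then obtain x where x: "x \<in> set (take i ws)" "g = h x" using gt by auto
      have xs: "x \<in> set ws" using x(1) by (meson in_set_takeD)
      have "x < ws ! i" using sorted_take_less[OF sws ilw x(1)] .
      thus ?thesis using hM[OF xs] x(2) we by simp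
    qed
    obtain X where X: "X \<subseteq> V" "card X = k - 1" "e \<in> MST w (V - X)"
      using eM unfolding M_def by blast
    have XV: "V - X \<subseteq> V" by blast
    interpret W: wsetup w "V - X" by (rule wsetup_sub[OF finV dw XV])
    have eL: "e \<in> Lset w (V - X)" using X(3) W.MST_eq by simp
    have eVX: "e \<in> all_edges (V - X)" using eL W.Lset_sub by blast
    have uvX: "u \<notin> X" "v \<notin> X" using eVX uv unfolding e_def all_edges_def by auto
    show "at_most_disjoint_paths (set (take i es)) u v (k - 1)"
      unfolding at_most_disjoint_paths_def
    proof (intro allI impI)
      fix P assume P: "finite P \<and> int_disjoint_paths (set (take i es)) u v P"
      show "card P \<le> k - 1"
      proof (rule ccontr)
        assume "\<not> card P \<le> k - 1"
        hence cX: "card X < card P" using X(2) by simp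
        have finX: "finite X" using X(1) finV by (rule finite_subset)
        obtain p where p: "p \<in> P" "internal p \<inter> X = {}"
          using pigeon[OF finX conjunct1[OF P] _ cX] P unfolding int_disjoint_paths_def by blast
        have pp: "is_path (set (take i es)) u v p" using P p(1) unfolding int_disjoint_paths_def by blast
        have len: "length p \<ge> 2" and hp: "hd p = u" and lp: "last p = v" and dp: "distinct p"
          and ed: "\<And>j. Suc j < length p \<Longrightarrow> {p ! j, p ! Suc j} \<in> set (take i es)"
          using pp unfolding is_path_def by auto
        have pX: "z \<notin> X" if "z \<in> set p" for z
          using that path_set[OF len] p(2) uvX hp lp by auto
        have "adj (light w (V - X) e) (p ! j) (p ! Suc j)" if j: "Suc j < length p" for j
        proof -
          define f where "f = {p ! j, p ! Suc j}"
          have fM: "f \<in> ?M" "w f < w e" using light_take ed[OF j] unfolding f_def by auto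
          have ne: "p ! j \<noteq> p ! Suc j" using dp j by (simp add: nth_eq_iff_index_eq)
          have inV: "p ! j \<in> V" "p ! Suc j \<in> V" using fM(1) MV unfolding f_def all_edges_def by auto
          have nX: "p ! j \<notin> X" "p ! Suc j \<notin> X" using pX j by auto
          have "f \<in> all_edges (V - X)" unfolding f_def using ne inV nX by (intro pair_all_edges) auto
          hence "f \<in> light w (V - X) e" using fM(2) unfolding light_def by simp
          thus ?thesis using ne unfolding f_def adj_def by simp
        qed
        hence "(adj (light w (V - X) e))\<^sup>*\<^sup>* u v" using pp by (intro path_walk) auto
        moreover have "e = {u, v}" using uv unfolding e_def by simp
        ultimately show False using W.Lset_D[OF eL] by blast
      qed
    qed
  qed
qed

definition Fz :: "'a set set \<Rightarrow> 'a set \<Rightarrow> 'a set set" where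
  "Fz F Z = {f \<in> F. f \<inter> Z = {}}"

definition reach :: "'a set set \<Rightarrow> 'a set \<Rightarrow> 'a \<Rightarrow> 'a \<Rightarrow> bool" where
  "reach F Z a b \<longleftrightarrow> a \<notin> Z \<and> (adj (Fz F Z))\<^sup>*\<^sup>* a b"

definition sep :: "'a set set \<Rightarrow> 'a set \<Rightarrow> 'a set \<Rightarrow> 'a set \<Rightarrow> bool" where
  "sep F A B Z \<longleftrightarrow> \<not> (\<exists>a\<in>A. \<exists>b\<in>B. reach F Z a b)"

definition apath :: "'a set set \<Rightarrow> 'a set \<Rightarrow> 'a set \<Rightarrow> 'a list \<Rightarrow> bool" where
  "apath F A B p \<longleftrightarrow> p \<noteq> [] \<and> distinct p \<and> successively (adj F) p \<and> hd p \<in> A \<and> last p \<in> B \<and>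
     (\<forall>z\<in>set p. z \<in> A \<longrightarrow> z = hd p) \<and> (\<forall>z\<in>set p. z \<in> B \<longrightarrow> z = last p)"

definition dfam :: "'a set set \<Rightarrow> 'a set \<Rightarrow> 'a set \<Rightarrow> nat \<Rightarrow> 'a list set \<Rightarrow> bool" where
  "dfam F A B k P \<longleftrightarrow> finite P \<and> card P = k \<and> (\<forall>p\<in>P. apath F A B p) \<and>
     (\<forall>p\<in>P. \<forall>q\<in>P. p \<noteq> q \<longrightarrow> set p \<inter> set q = {})"

lemma Fz_mono: "F \<subseteq> F' \<Longrightarrow> Z' \<subseteq> Z \<Longrightarrow> Fz F Z \<subseteq> Fz F' Z'"
  unfolding Fz_def by blast

lemma reach_mono: "F \<subseteq> F' \<Longrightarrow> Z' \<subseteq> Z \<Longrightarrow> reach F Z a b \<Longrightarrow> reach F' Z' a b"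
proof -
  assume a: "F \<subseteq> F'" "Z' \<subseteq> Z" "reach F Z a b"
  have "(adj (Fz F Z))\<^sup>*\<^sup>* a b" "a \<notin> Z" using a(3) unfolding reach_def by auto
  hence "(adj (Fz F' Z'))\<^sup>*\<^sup>* a b" "a \<notin> Z'" using Fz_mono[OF a(1,2)] rt_mono a(2) by auto
  thus ?thesis unfolding reach_def by simp
qed

lemma reach_refl: "a \<notin> Z \<Longrightarrow> reach F Z a a"
  unfolding reach_def by simp

lemma reach_notin: "reach F Z a b \<Longrightarrow> b \<notin> Z"
proof -
  assume r: "reach F Z a b"
  have "(adj (Fz F Z))\<^sup>*\<^sup>* a b" "a \<notin> Z" using r unfolding reach_def by auto
  thus ?thesis
  proof (induction rule: rtranclp_induct)
    case (step t t')
    thus ?case unfolding adj_def Fz_def by blast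
  qed simp
qed

lemma reach_trans: "reach F Z a b \<Longrightarrow> reach F Z b c \<Longrightarrow> reach F Z a c"
  unfolding reach_def by (meson rtranclp_trans)

lemma reach_sym: "reach F Z a b \<Longrightarrow> reach F Z b a"
  using reach_notin[of F Z a b] unfolding reach_def by (meson rt_sym)

lemma reach_step: "reach F Z a t \<Longrightarrow> adj F t t' \<Longrightarrow> {t, t'} \<inter> Z = {} \<Longrightarrow> reach F Z a t'"
proof -
  assume r: "reach F Z a t" and a: "adj F t t'" and d: "{t, t'} \<inter> Z = {}"
  have "adj (Fz F Z) t t'" using a d unfolding adj_def Fz_def by simp
  thus ?thesis using r unfolding reach_def by (meson rtranclp.rtrancl_into_rtrancl)
qed

lemma list_reach:
  "successively (adj G) p \<Longrightarrow> p \<noteq> [] \<Longrightarrow> (\<forall>z\<in>set p. z \<notin> Y) \<Longrightarrow> reach G Y (hd p) (last p)"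
proof (induction p)
  case Nil thus ?case by simp
next
  case (Cons a p)
  show ?case
  proof (cases "p = []")
    case True thus ?thesis using Cons.prems by (simp add: reach_refl)
  next
    case False
    have s: "adj G a (hd p)" "successively (adj G) p" using Cons.prems(1) False
      by (auto simp: successively_Cons)
    have r: "reach G Y (hd p) (last p)" using Cons.IH[OF s(2) False] Cons.prems(3) by simp
    have "hd p \<in> set p" using False by simp
    hence "{a, hd p} \<inter> Y = {}" using Cons.prems(3) by auto
    hence "adj (Fz G Y) a (hd p)" using s(1) unfolding adj_def Fz_def by simp
    hence "reach G Y a (last p)" using r Cons.prems(3) unfolding reach_def
      by (meson converse_rtranclp_into_rtranclp list.set_intros(1))
    thus ?thesis using False by simp
  qed
qed

lemma sep_sym1: "sep F A B Z \<Longrightarrow> sep F B A Z"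
  unfolding sep_def
proof (intro notI)
  assume "\<not> (\<exists>a\<in>A. \<exists>b\<in>B. reach F Z a b)" "\<exists>a\<in>B. \<exists>b\<in>A. reach F Z a b"
  then obtain a b where "a \<in> B" "b \<in> A" "reach F Z a b" "\<not> reach F Z b a" by blast
  thus False using reach_sym by metis
qed

lemma sep_sym: "sep F A B Z \<longleftrightarrow> sep F B A Z"
  using sep_sym1 by metis

lemma successively_adj_mono: "successively (adj F) p \<Longrightarrow> F \<subseteq> F' \<Longrightarrow> successively (adj F') p"
  using adj_mono successively_mono by metis

lemma apath_mono: "apath F A B p \<Longrightarrow> F \<subseteq> F' \<Longrightarrow> apath F' A B p"
  unfolding apath_def using successively_adj_mono by blast

lemma dfam_mono: "dfam F A B k P \<Longrightarrow> F \<subseteq> F' \<Longrightarrow> dfam F' A B k P"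
  unfolding dfam_def using apath_mono by blast

lemma apath_rev: "apath F A B p \<Longrightarrow> apath F B A (rev p)"
proof -
  assume a: "apath F A B p"
  have "successively (\<lambda>x y. adj F y x) p" using a unfolding apath_def
    by (metis (mono_tags, lifting) adj_sym successively_mono)
  hence s: "successively (adj F) (rev p)" by simp
  have ne: "p \<noteq> []" using a unfolding apath_def by simp
  show ?thesis using a s ne unfolding apath_def by (simp add: hd_rev last_rev)
qed

lemma dfam_rev: "dfam F A B k P \<Longrightarrow> dfam F B A k (rev ` P)"
proof -
  assume a: "dfam F A B k P"
  have inj: "inj_on rev P" by (simp add: inj_on_def)
  show ?thesis using a unfolding dfam_def
    by (auto simp: card_image[OF inj] apath_rev)
qed

lemma claim1:
  assumes eF: "{x, y} \<in> F" and G: "G = F - {{x, y}}"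
    and sepY: "sep G A B Y" and noA: "\<forall>a\<in>A. \<not> reach G Y a y"
    and sepZ: "sep G A (insert x Y) Z"
  shows "sep F A B Z"
  unfolding sep_def
proof
  assume "\<exists>a\<in>A. \<exists>b\<in>B. reach F Z a b"
  then obtain a b where ab: "a \<in> A" "b \<in> B" "reach F Z a b" by blast
  let ?X1 = "insert x Y"
  have aZ: "a \<notin> Z" and rt: "(adj (Fz F Z))\<^sup>*\<^sup>* a b" using ab(3) unfolding reach_def by auto
  have GF: "G \<subseteq> F" using G by blast
  have inv: "(\<exists>z\<in>?X1. reach G Z a z) \<or> reach G (Z \<union> ?X1) a t"
    if "(adj (Fz F Z))\<^sup>*\<^sup>* a t" for t
    using that
  proof (induction rule: rtranclp_induct)
    case base
    show ?case
    proof (cases "a \<in> ?X1")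
      case True thus ?thesis using reach_refl[OF aZ] by blast
    next
      case False thus ?thesis using aZ reach_refl[of a "Z \<union> ?X1" G] by blast
    qed
  next
    case (step t t')
    from step.IH show ?case
    proof
      assume "\<exists>z\<in>?X1. reach G Z a z" thus ?thesis by blast
    next
      assume r: "reach G (Z \<union> ?X1) a t"
      have tn: "t \<notin> Z \<union> ?X1" using reach_notin[OF r] .
      have tt: "t \<noteq> t'" "{t, t'} \<in> F" "{t, t'} \<inter> Z = {}"
        using step.hyps(2) unfolding adj_def Fz_def by auto
      show ?thesis
      proof (cases "{t, t'} = {x, y}")
        case True
        hence "t = y" using tn by (auto simp: doubleton_eq_iff)
        have "Y \<subseteq> Z \<union> ?X1" by blast
        hence "reach G Y a t" using reach_mono[OF order_refl _ r] by simp
        thus ?thesis using noA ab(1) \<open>t = y\<close> by blast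
      next
        case False
        hence tG: "{t, t'} \<in> G" using tt(2) G by blast
        have adjG: "adj G t t'" using tG tt(1) unfolding adj_def by simp
        show ?thesis
        proof (cases "t' \<in> ?X1")
          case True
          have "Z \<subseteq> Z \<union> ?X1" by blast
          hence "reach G Z a t" using reach_mono[OF order_refl _ r] by simp
          hence "reach G Z a t'" using adjG tt(3) by (rule reach_step)
          thus ?thesis using True by blast
        next
          case False
          have "{t, t'} \<inter> (Z \<union> ?X1) = {}" using tn False tt(3) by blast
          hence "reach G (Z \<union> ?X1) a t'" by (rule reach_step[OF r adjG])
          thus ?thesis by blast
        qed
      qed
    qed
  qed
  from inv[OF rt] show False
  proof
    assume "\<exists>z\<in>?X1. reach G Z a z"
    then obtain z where "z \<in> ?X1" "reach G Z a z" by blast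
    thus False using sepZ ab(1) unfolding sep_def by blast
  next
    assume r: "reach G (Z \<union> ?X1) a b"
    have "Y \<subseteq> Z \<union> ?X1" by blast
    hence "reach G Y a b" using reach_mono[OF order_refl _ r] by simp
    thus False using sepY ab(1,2) unfolding sep_def by blast
  qed
qed

lemma dfam_last_bij:
  assumes "dfam G A X (card X) P" "finite X"
  shows "last ` P = X" "inj_on last P"
proof -
  have ap: "\<And>p. p \<in> P \<Longrightarrow> apath G A X p" and dis: "\<forall>p\<in>P. \<forall>q\<in>P. p \<noteq> q \<longrightarrow> set p \<inter> set q = {}"
    and fin: "finite P" and c: "card P = card X" using assms(1) unfolding dfam_def by auto
  show inj: "inj_on last P"
  proof (rule inj_onI)
    fix p q assume pq: "p \<in> P" "q \<in> P" "last p = last q"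
    have "p \<noteq> []" "q \<noteq> []" using ap pq unfolding apath_def by auto
    hence "last p \<in> set p" "last q \<in> set q" by simp_all
    hence "last p \<in> set p \<inter> set q" using pq(3) by simp
    thus "p = q" using dis pq(1,2) by blast
  qed
  have sub: "last ` P \<subseteq> X" using ap unfolding apath_def by blast
  have "card (last ` P) = card X" using card_image[OF inj] c by simp
  thus "last ` P = X" using card_subset_eq[OF assms(2) sub] by simp
qed

lemma dfam_hd_bij:
  assumes "dfam G X B (card X) Q" "finite X"
  shows "hd ` Q = X" "inj_on hd Q"
proof -
  have ap: "\<And>p. p \<in> Q \<Longrightarrow> apath G X B p" and dis: "\<forall>p\<in>Q. \<forall>q\<in>Q. p \<noteq> q \<longrightarrow> set p \<inter> set q = {}"
    and fin: "finite Q" and c: "card Q = card X" using assms(1) unfolding dfam_def by auto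
  show inj: "inj_on hd Q"
  proof (rule inj_onI)
    fix p q assume pq: "p \<in> Q" "q \<in> Q" "hd p = hd q"
    have "p \<noteq> []" "q \<noteq> []" using ap pq unfolding apath_def by auto
    hence "hd p \<in> set p" "hd q \<in> set q" by simp_all
    hence "hd p \<in> set p \<inter> set q" using pq(3) by simp
    thus "p = q" using dis pq(1,2) by blast
  qed
  have sub: "hd ` Q \<subseteq> X" using ap unfolding apath_def by blast
  have "card (hd ` Q) = card X" using card_image[OF inj] c by simp
  thus "hd ` Q = X" using card_subset_eq[OF assms(2) sub] by simp
qed

lemma prefix_reach:
  assumes "successively (adj G) p" "distinct p" "z \<in> set p" "z \<notin> Y"
    "\<forall>w\<in>set p. w \<in> Y \<longrightarrow> w = last p"
  shows "reach G Y (hd p) z"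
proof -
  obtain p1 p2 where sp: "p = p1 @ z # p2" using assms(3) by (meson split_list)
  let ?ps = "p1 @ [z]"
  have eq: "p = ?ps @ p2" using sp by simp
  have s: "successively (adj G) ?ps" using assms(1) unfolding eq successively_append_iff by simp
  have lp: "last p \<in> set (z # p2)" using sp by simp
  have dj: "set p1 \<inter> set (z # p2) = {}" using assms(2) sp by simp
  have "\<forall>w\<in>set ?ps. w \<notin> Y"
  proof
    fix w assume w: "w \<in> set ?ps"
    show "w \<notin> Y"
    proof
      assume wY: "w \<in> Y"
      hence "w \<noteq> z" using assms(4) by blast
      hence "w \<in> set p1" using w by simp
      moreover have "w = last p" using assms(5) wY w sp by auto
      ultimately show False using lp dj by blast
    qed
  qed
  from list_reach[OF s _ this] have "reach G Y (hd ?ps) (last ?ps)" by simp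
  moreover have "hd ?ps = hd p" using sp by (cases p1) auto
  ultimately show ?thesis by simp
qed

lemma suffix_reach:
  assumes "successively (adj G) q" "distinct q" "z \<in> set q" "z \<notin> Y"
    "\<forall>w\<in>set q. w \<in> Y \<longrightarrow> w = hd q"
  shows "reach G Y z (last q)"
proof -
  obtain q1 q2 where sp: "q = q1 @ z # q2" using assms(3) by (meson split_list)
  let ?qs = "z # q2"
  have s: "successively (adj G) ?qs" using assms(1) unfolding sp successively_append_iff by simp
  have hq: "hd q \<in> set (q1 @ [z])" using sp by (cases q1) auto
  have dj: "set (q1 @ [z]) \<inter> set q2 = {}" using assms(2) sp by simp
  have "\<forall>w\<in>set ?qs. w \<notin> Y"
  proof
    fix w assume w: "w \<in> set ?qs"
    show "w \<notin> Y"
    proof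
      assume wY: "w \<in> Y"
      hence "w \<noteq> z" using assms(4) by blast
      hence "w \<in> set q2" using w by simp
      moreover have "w = hd q" using assms(5) wY w sp by auto
      ultimately show False using hq dj by blast
    qed
  qed
  from list_reach[OF s _ this] have "reach G Y (hd ?qs) (last ?qs)" by simp
  moreover have "last ?qs = last q" using sp by simp
  ultimately show ?thesis by simp
qed

lemma combine:
  fixes F :: "'a set set" and x y :: 'a
  assumes G: "G = F - {{x, y}}"
    and eF: "{x, y} \<in> F" and xy: "x \<noteq> y" and finY: "finite Y" and xY: "x \<notin> Y" and yY: "y \<notin> Y"
    and sepY: "sep G A B Y"
    and P: "dfam G A (insert x Y) (card (insert x Y)) P"
    and Q: "dfam G (insert y Y) B (card (insert y Y)) Q"
  shows "\<exists>R. dfam F A B (card (insert x Y)) R"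
proof -
  let ?X1 = "insert x Y" and ?X2 = "insert y Y"
  have GF: "G \<subseteq> F" using G by blast
  have finX1: "finite ?X1" "finite ?X2" using finY by auto
  have apP: "\<And>p. p \<in> P \<Longrightarrow> apath G A ?X1 p" using P unfolding dfam_def by blast
  have apQ: "\<And>q. q \<in> Q \<Longrightarrow> apath G ?X2 B q" using Q unfolding dfam_def by blast
  have disP: "\<And>p q. p \<in> P \<Longrightarrow> q \<in> P \<Longrightarrow> p \<noteq> q \<Longrightarrow> set p \<inter> set q = {}"
    using P unfolding dfam_def by blast
  have disQ: "\<And>p q. p \<in> Q \<Longrightarrow> q \<in> Q \<Longrightarrow> p \<noteq> q \<Longrightarrow> set p \<inter> set q = {}"
    using Q unfolding dfam_def by blast
  note lb = dfam_last_bij[OF P finX1(1)]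
  note hb = dfam_hd_bij[OF Q finX1(2)]
  define pp where "pp t = the_inv_into P last t" for t
  define qq where "qq t = the_inv_into Q hd t" for t
  have pp: "pp t \<in> P" "last (pp t) = t" if "t \<in> ?X1" for t
    unfolding pp_def using lb that by (auto intro: the_inv_into_into f_the_inv_into_f)
  have qq: "qq t \<in> Q" "hd (qq t) = t" if "t \<in> ?X2" for t
    unfolding qq_def using hb that by (auto intro: the_inv_into_into f_the_inv_into_f)
  have pfacts: "p \<noteq> [] \<and> distinct p \<and> successively (adj G) p \<and> hd p \<in> A \<and> last p \<in> ?X1 \<and>
      (\<forall>z\<in>set p. z \<in> A \<longrightarrow> z = hd p) \<and> (\<forall>z\<in>set p. z \<in> ?X1 \<longrightarrow> z = last p)" if "p \<in> P" for p
    using apP[OF that] unfolding apath_def by blast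
  have qfacts: "q \<noteq> [] \<and> distinct q \<and> successively (adj G) q \<and> hd q \<in> ?X2 \<and> last q \<in> B \<and>
      (\<forall>z\<in>set q. z \<in> ?X2 \<longrightarrow> z = hd q) \<and> (\<forall>z\<in>set q. z \<in> B \<longrightarrow> z = last q)" if "q \<in> Q" for q
    using apQ[OF that] unfolding apath_def by blast
  have K1: "reach G Y (hd p) z" if "p \<in> P" "z \<in> set p" "z \<notin> Y" for p z
  proof -
    have "\<forall>w\<in>set p. w \<in> Y \<longrightarrow> w = last p" using pfacts[OF that(1)] by blast
    thus ?thesis using pfacts[OF that(1)] that(2,3) by (intro prefix_reach) auto
  qed
  have K2: "reach G Y z (last q)" if "q \<in> Q" "z \<in> set q" "z \<notin> Y" for q z
  proof -
    have "\<forall>w\<in>set q. w \<in> Y \<longrightarrow> w = hd q" using qfacts[OF that(1)] by blast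
    thus ?thesis using qfacts[OF that(1)] that(2,3) by (intro suffix_reach) auto
  qed
  have K: "z \<in> Y \<and> z = last p \<and> z = hd q" if "p \<in> P" "q \<in> Q" "z \<in> set p" "z \<in> set q" for p q z
  proof -
    have "z \<in> Y"
    proof (rule ccontr)
      assume "z \<notin> Y"
      hence "reach G Y (hd p) (last q)" using K1[OF that(1,3)] K2[OF that(2,4)] by (meson reach_trans)
      moreover have "hd p \<in> A" "last q \<in> B" using pfacts[OF that(1)] qfacts[OF that(2)] by auto
      ultimately show False using sepY unfolding sep_def by blast
    qed
    thus ?thesis using pfacts[OF that(1)] qfacts[OF that(2)] that(3,4) by auto
  qed
  have KA: "z \<in> Y" if "q \<in> Q" "z \<in> set q" "z \<in> A" for q z
  proof (rule ccontr)
    assume "z \<notin> Y"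
    hence "reach G Y z (last q)" using K2[OF that(1,2)] by simp
    moreover have "last q \<in> B" using qfacts[OF that(1)] by auto
    ultimately show False using sepY that(3) unfolding sep_def by blast
  qed
  have KB: "z \<in> Y" if "p \<in> P" "z \<in> set p" "z \<in> B" for p z
  proof (rule ccontr)
    assume "z \<notin> Y"
    hence "reach G Y (hd p) z" using K1[OF that(1,2)] by simp
    moreover have "hd p \<in> A" using pfacts[OF that(1)] by auto
    ultimately show False using sepY that(3) unfolding sep_def by blast
  qed
  define sg where "sg t = (if t = x then y else t)" for t
  define c where "c t = (if t = x then pp x @ qq y else pp t @ tl (qq t))" for t
  have sgX: "sg t \<in> ?X2" if "t \<in> ?X1" for t using that unfolding sg_def by auto
  have tlsub: "set (tl xs) \<subseteq> set xs" for xs :: "'a list" by (cases xs) auto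
  have cset: "set (c t) \<subseteq> set (pp t) \<union> set (qq (sg t))" for t
    unfolding c_def sg_def using tlsub[of "qq t"] by auto
  have cx: "apath F A B (c x)"
  proof -
    have px: "pp x \<in> P" "last (pp x) = x" using pp by auto
    have qy: "qq y \<in> Q" "hd (qq y) = y" using qq by auto
    let ?p = "pp x" and ?q = "qq y"
    note pf = pfacts[OF px(1)] and qf = qfacts[OF qy(1)]
    have disj: "set ?p \<inter> set ?q = {}"
    proof (rule ccontr)
      assume "set ?p \<inter> set ?q \<noteq> {}"
      then obtain z where z: "z \<in> set ?p" "z \<in> set ?q" by blast
      have "z \<in> Y" "z = last ?p" using K[OF px(1) qy(1) z] by auto
      thus False using px(2) xY by metis
    qed
    have ce: "c x = ?p @ ?q" unfolding c_def by simp
    have succ: "successively (adj F) (?p @ ?q)"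
      unfolding successively_append_iff
    proof (intro conjI)
      show "successively (adj F) ?p" using pf successively_adj_mono[OF _ GF] by blast
      show "successively (adj F) ?q" using qf successively_adj_mono[OF _ GF] by blast
      have "adj F x y" using eF xy unfolding adj_def by simp
      thus "?p = [] \<or> ?q = [] \<or> adj F (last ?p) (hd ?q)" using px(2) qy(2) by simp
    qed
    have Astr: "\<forall>z\<in>set (?p @ ?q). z \<in> A \<longrightarrow> z = hd (?p @ ?q)"
    proof (intro ballI impI)
      fix z assume z: "z \<in> set (?p @ ?q)" "z \<in> A"
      show "z = hd (?p @ ?q)"
      proof (cases "z \<in> set ?p")
        case True thus ?thesis using pf z(2) by simp
      next
        case False
        hence zq: "z \<in> set ?q" using z(1) by simp
        have "z \<in> Y" by (rule KA[OF qy(1) zq z(2)])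
        moreover have "z = y" using qf zq \<open>z \<in> Y\<close> qy(2) by auto
        ultimately show ?thesis using yY by simp
      qed
    qed
    have Bstr: "\<forall>z\<in>set (?p @ ?q). z \<in> B \<longrightarrow> z = last (?p @ ?q)"
    proof (intro ballI impI)
      fix z assume z: "z \<in> set (?p @ ?q)" "z \<in> B"
      show "z = last (?p @ ?q)"
      proof (cases "z \<in> set ?p")
        case True
        have "z \<in> Y" by (rule KB[OF px(1) True z(2)])
        moreover have "z = x" using pf True \<open>z \<in> Y\<close> px(2) by auto
        ultimately show ?thesis using xY by simp
      next
        case False
        hence zq: "z \<in> set ?q" using z(1) by simp
        thus ?thesis using qf z(2) by simp
      qed
    qed
    show ?thesis unfolding ce apath_def using pf qf disj succ Astr Bstr by auto
  qed
  have cY: "apath F A B (c t)" if tY: "t \<in> Y" for t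
  proof -
    have tx: "t \<noteq> x" using tY xY by blast
    have pt: "pp t \<in> P" "last (pp t) = t" using pp tY by auto
    have qt: "qq t \<in> Q" "hd (qq t) = t" using qq tY by auto
    let ?p = "pp t" and ?q = "qq t"
    note pf = pfacts[OF pt(1)] and qf = qfacts[OF qt(1)]
    have qsplit: "?q = hd ?q # tl ?q" using qf by simp
    have hdtl: "hd ?q \<notin> set (tl ?q)" using qf qsplit by (metis distinct.simps(2))
    have disj: "set ?p \<inter> set (tl ?q) = {}"
    proof (rule ccontr)
      assume "set ?p \<inter> set (tl ?q) \<noteq> {}"
      then obtain z where z: "z \<in> set ?p" "z \<in> set (tl ?q)" by blast
      hence "z \<in> set ?q" by (meson list.set_sel(2) qf)
      from K[OF pt(1) qt(1) z(1) this] z(2) hdtl show False by metis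
    qed
    have ce: "c t = ?p @ tl ?q" unfolding c_def using tx by simp
    have sq: "successively (adj G) ?q" using qf by simp
    have sq2: "successively (adj G) (hd ?q # tl ?q)" using sq by (subst (asm) qsplit)
    hence sq3: "tl ?q = [] \<or> adj G (hd ?q) (hd (tl ?q)) \<and> successively (adj G) (tl ?q)"
      by (simp only: successively_Cons)
    have succ: "successively (adj F) (?p @ tl ?q)"
      unfolding successively_append_iff
    proof (intro conjI)
      show "successively (adj F) ?p" using pf successively_adj_mono[OF _ GF] by blast
      have "successively (adj G) (tl ?q)" using sq3 by auto
      thus "successively (adj F) (tl ?q)" using successively_adj_mono[OF _ GF] by blast
      show "?p = [] \<or> tl ?q = [] \<or> adj F (last ?p) (hd (tl ?q))"
      proof (cases "tl ?q = []")
        case False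
        have "adj G (hd ?q) (hd (tl ?q))" using sq3 False by simp
        hence "adj F (hd ?q) (hd (tl ?q))" using GF by (rule adj_mono[rotated])
        thus ?thesis using pt(2) qt(2) by simp
      qed simp
    qed
    have lastc: "last (?p @ tl ?q) = last ?q"
    proof (cases "tl ?q = []")
      case True
      hence "?q = [hd ?q]" using qsplit by simp
      hence "last ?q = hd ?q" by (metis last.simps)
      thus ?thesis using True pt(2) qt(2) by simp
    next
      case False
      hence "last (tl ?q) = last ?q" by (simp add: last_tl)
      thus ?thesis using False by simp
    qed
    have hdc: "hd (?p @ tl ?q) = hd ?p" using pf by simp
    have Astr: "\<forall>z\<in>set (?p @ tl ?q). z \<in> A \<longrightarrow> z = hd (?p @ tl ?q)"
    proof (intro ballI impI)
      fix z assume z: "z \<in> set (?p @ tl ?q)" "z \<in> A"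
      show "z = hd (?p @ tl ?q)"
      proof (cases "z \<in> set ?p")
        case True thus ?thesis using pf z(2) hdc by simp
      next
        case False
        hence zq: "z \<in> set (tl ?q)" using z(1) by simp
        hence zq': "z \<in> set ?q" by (meson list.set_sel(2) qf)
        have "z \<in> Y" by (rule KA[OF qt(1) zq' z(2)])
        hence "z = hd ?q" using qf zq' by auto
        thus ?thesis using zq hdtl by simp
      qed
    qed
    have Bstr: "\<forall>z\<in>set (?p @ tl ?q). z \<in> B \<longrightarrow> z = last (?p @ tl ?q)"
    proof (intro ballI impI)
      fix z assume z: "z \<in> set (?p @ tl ?q)" "z \<in> B"
      show "z = last (?p @ tl ?q)"
      proof (cases "z \<in> set ?p")
        case True
        have "z \<in> Y" by (rule KB[OF pt(1) True z(2)])
        hence "z = t" using pf True pt(2) by auto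
        hence "hd ?q \<in> B" using qt(2) z(2) by simp
        hence "hd ?q = last ?q" using qf by (metis list.set_sel(1))
        thus ?thesis using lastc \<open>z = t\<close> qt(2) by simp
      next
        case False
        hence zq: "z \<in> set (tl ?q)" using z(1) by simp
        hence "z \<in> set ?q" by (meson list.set_sel(2) qf)
        hence "z = last ?q" using qf z(2) by simp
        thus ?thesis using lastc by simp
      qed
    qed
    have dist: "distinct (?p @ tl ?q)" using pf qf disj by (simp add: distinct_tl)
    show ?thesis unfolding ce apath_def using pf qf dist succ Astr Bstr hdc lastc by auto
  qed
  have capath: "apath F A B (c t)" if "t \<in> ?X1" for t
    using that cx cY by blast
  have sginj: "sg t = sg t' \<Longrightarrow> t \<in> ?X1 \<Longrightarrow> t' \<in> ?X1 \<Longrightarrow> t = t'" for t t'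
    unfolding sg_def using yY xY by (auto split: if_splits)
  have cdis: "set (c t) \<inter> set (c t') = {}" if tt: "t \<in> ?X1" "t' \<in> ?X1" "t \<noteq> t'" for t t'
  proof -
    have d1: "set (pp t) \<inter> set (pp t') = {}"
      using disP[OF pp(1)[OF tt(1)] pp(1)[OF tt(2)]] pp(2)[OF tt(1)] pp(2)[OF tt(2)] tt(3) by metis
    have sne: "sg t \<noteq> sg t'" using sginj tt by blast
    have d2: "set (qq (sg t)) \<inter> set (qq (sg t')) = {}"
      using disQ[OF qq(1)[OF sgX[OF tt(1)]] qq(1)[OF sgX[OF tt(2)]]]
        qq(2)[OF sgX[OF tt(1)]] qq(2)[OF sgX[OF tt(2)]] sne by metis
    have d3: "set (pp s) \<inter> set (qq (sg s')) = {}" if ss: "s \<in> ?X1" "s' \<in> ?X1" "s \<noteq> s'" for s s'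
    proof (rule ccontr)
      assume "set (pp s) \<inter> set (qq (sg s')) \<noteq> {}"
      then obtain z where z: "z \<in> set (pp s)" "z \<in> set (qq (sg s'))" by blast
      from K[OF pp(1)[OF ss(1)] qq(1)[OF sgX[OF ss(2)]] z]
      have "z \<in> Y" "z = s" "z = sg s'" using pp(2)[OF ss(1)] qq(2)[OF sgX[OF ss(2)]] by auto
      hence "s' \<noteq> x" using yY unfolding sg_def by auto
      hence "sg s' = s'" unfolding sg_def by simp
      thus False using \<open>z = s\<close> \<open>z = sg s'\<close> ss(3) by simp
    qed
    have "set (c t) \<inter> set (c t') \<subseteq> (set (pp t) \<union> set (qq (sg t))) \<inter> (set (pp t') \<union> set (qq (sg t')))"
      using cset[of t] cset[of t'] by blast
    also have "\<dots> = {}" using d1 d2 d3[OF tt] d3[OF tt(2) tt(1)] tt(3) by blast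
    finally show ?thesis by blast
  qed
  have cinj: "inj_on c ?X1"
  proof (rule inj_onI)
    fix t t' assume tt: "t \<in> ?X1" "t' \<in> ?X1" "c t = c t'"
    show "t = t'"
    proof (rule ccontr)
      assume "t \<noteq> t'"
      from cdis[OF tt(1,2) this] tt(3) have "set (c t) = {}" by simp
      thus False using capath[OF tt(1)] unfolding apath_def by simp
    qed
  qed
  have "dfam F A B (card ?X1) (c ` ?X1)"
    unfolding dfam_def
  proof (intro conjI)
    show "finite (c ` ?X1)" using finX1 by simp
    show "card (c ` ?X1) = card ?X1" by (rule card_image[OF cinj])
    show "\<forall>p\<in>c ` ?X1. apath F A B p" using capath by blast
    show "\<forall>p\<in>c ` ?X1. \<forall>q\<in>c ` ?X1. p \<noteq> q \<longrightarrow> set p \<inter> set q = {}"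
      using cdis by blast
  qed
  thus ?thesis by blast
qed

lemma sep_insert:
  assumes "sep (F - {{x, y}}) A B Y"
  shows "sep F A B (insert x Y)"
  unfolding sep_def
proof
  assume "\<exists>a\<in>A. \<exists>b\<in>B. reach F (insert x Y) a b"
  then obtain a b where ab: "a \<in> A" "b \<in> B" "reach F (insert x Y) a b" by blast
  have sub: "Fz F (insert x Y) \<subseteq> Fz (F - {{x, y}}) Y" unfolding Fz_def by blast
  have r: "(adj (Fz F (insert x Y)))\<^sup>*\<^sup>* a b" "a \<notin> Y" using ab(3) unfolding reach_def by auto
  have "(adj (Fz (F - {{x, y}}) Y))\<^sup>*\<^sup>* a b" by (rule rt_mono[OF sub r(1)])
  hence "reach (F - {{x, y}}) Y a b" using r(2) unfolding reach_def by simp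
  thus False using assms ab(1,2) unfolding sep_def by blast
qed

lemma orient_case:
  assumes IH: "\<And>A' B'. finite A' \<Longrightarrow> finite B' \<Longrightarrow> \<forall>Z. finite Z \<and> sep G A' B' Z \<longrightarrow> k \<le> card Z
      \<Longrightarrow> \<exists>P. dfam G A' B' k P"
    and G: "G = F - {{x, y}}" and eF: "{x, y} \<in> F" and xy: "x \<noteq> y"
    and finY: "finite Y" and xY: "x \<notin> Y" and yY: "y \<notin> Y" and cY: "card Y + 1 = k"
    and sepY: "sep G A B Y" and finA: "finite A" and finB: "finite B"
    and hyp: "\<forall>Z. finite Z \<and> sep F A B Z \<longrightarrow> k \<le> card Z"
    and noA: "\<forall>a\<in>A. \<not> reach G Y a y" and noB: "\<forall>b\<in>B. \<not> reach G Y x b"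
  shows "\<exists>R. dfam F A B k R"
proof -
  have c1: "card (insert x Y) = k" "card (insert y Y) = k" using cY finY xY yY by auto
  have h1: "\<forall>Z. finite Z \<and> sep G A (insert x Y) Z \<longrightarrow> k \<le> card Z"
  proof (intro allI impI)
    fix Z assume Z: "finite Z \<and> sep G A (insert x Y) Z"
    have "sep F A B Z" using claim1[OF eF G sepY noA] Z by blast
    thus "k \<le> card Z" using hyp Z by blast
  qed
  have G': "G = F - {{y, x}}" using G by (simp add: insert_commute)
  have eF': "{y, x} \<in> F" using eF by (simp add: insert_commute)
  have noB': "\<forall>b\<in>B. \<not> reach G Y b x"
  proof (intro ballI notI)
    fix b assume "b \<in> B" "reach G Y b x"
    thus False using noB reach_sym[of G Y b x] by blast
  qed
  have sepY': "sep G B A Y" using sep_sym1[OF sepY] .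
  have h2: "\<forall>Z. finite Z \<and> sep G B (insert y Y) Z \<longrightarrow> k \<le> card Z"
  proof (intro allI impI)
    fix Z assume Z: "finite Z \<and> sep G B (insert y Y) Z"
    have "sep F B A Z" using claim1[OF eF' G' sepY' noB'] Z by blast
    hence "sep F A B Z" by (rule sep_sym1)
    thus "k \<le> card Z" using hyp Z by blast
  qed
  obtain P where P: "dfam G A (insert x Y) k P" using IH[OF finA _ h1] finY by blast
  obtain Q' where Q': "dfam G B (insert y Y) k Q'" using IH[OF finB _ h2] finY by blast
  have Q: "dfam G (insert y Y) B k (rev ` Q')" using dfam_rev[OF Q'] .
  have "\<exists>R. dfam F A B (card (insert x Y)) R"
    using combine[OF G eF xy finY xY yY sepY] P Q c1 by simp
  thus ?thesis using c1 by simp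
qed

theorem menger:
  assumes "finite F" "\<forall>e\<in>F. card e = 2" "finite A" "finite B"
    "\<forall>Z. finite Z \<and> sep F A B Z \<longrightarrow> k \<le> card Z"
  shows "\<exists>P. dfam F A B k P"
  using assms
proof (induction "card F" arbitrary: F A B rule: less_induct)
  case less
  show ?case
  proof (cases "F = {}")
    case True
    have "sep F A B (A \<inter> B)" unfolding sep_def
    proof
      assume "\<exists>a\<in>A. \<exists>b\<in>B. reach F (A \<inter> B) a b"
      then obtain a b where ab: "a \<in> A" "b \<in> B" "reach F (A \<inter> B) a b" by blast
      have "Fz F (A \<inter> B) = {}" using True unfolding Fz_def by simp
      hence "adj (Fz F (A \<inter> B)) = (\<lambda>_ _. False)" unfolding adj_def by (simp add: fun_eq_iff)
      hence "a = b" "a \<notin> A \<inter> B" using ab(3) unfolding reach_def by (auto elim: rtranclp.cases)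
      thus False using ab(1,2) by simp
    qed
    hence kc: "k \<le> card (A \<inter> B)" using less.prems(3,5) by blast
    obtain S where S: "S \<subseteq> A \<inter> B" "card S = k" "finite S" using obtain_subset_with_card_n[OF kc] by blast
    have inj: "inj_on (\<lambda>a. [a]) S" by (simp add: inj_on_def)
    have "dfam F A B k ((\<lambda>a. [a]) ` S)" unfolding dfam_def apath_def
      using S card_image[OF inj] by auto
    thus ?thesis by blast
  next
    case False
    then obtain e where eF: "e \<in> F" by blast
    obtain x y where xy: "e = {x, y}" "x \<noteq> y" using less.prems(2) eF by (meson card_2_iff)
    define G where "G = F - {e}"
    have cG: "card G < card F" unfolding G_def using eF less.prems(1) by (meson card_Diff1_less)
    have finG: "finite G" "\<forall>e\<in>G. card e = 2" using less.prems(1,2) unfolding G_def by auto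
    have IH: "\<And>A' B'. finite A' \<Longrightarrow> finite B' \<Longrightarrow> \<forall>Z. finite Z \<and> sep G A' B' Z \<longrightarrow> k \<le> card Z
      \<Longrightarrow> \<exists>P. dfam G A' B' k P"
      using less.hyps[OF cG finG(1) finG(2)] by blast
    show ?thesis
    proof (cases "\<forall>Z. finite Z \<and> sep G A B Z \<longrightarrow> k \<le> card Z")
      case True
      obtain P where "dfam G A B k P" using IH[OF less.prems(3,4) True] by blast
      hence "dfam F A B k P" using dfam_mono G_def by blast
      thus ?thesis by blast
    next
      case False
      then obtain Y where Y: "finite Y" "sep G A B Y" "card Y < k" by auto
      have G1: "G = F - {{x, y}}" using G_def xy by simp
      have G2: "G = F - {{y, x}}" using G1 by (simp add: insert_commute)
      have s1: "sep F A B (insert x Y)" using Y(2) unfolding G1 by (rule sep_insert)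
      have s2: "sep F A B (insert y Y)" using Y(2) unfolding G2 by (rule sep_insert)
      have k1: "k \<le> card (insert x Y)" "k \<le> card (insert y Y)"
        using less.prems(5) s1 s2 Y(1) by auto
      have xY: "x \<notin> Y" using k1(1) Y(3) by (metis insert_absorb not_le)
      have yY: "y \<notin> Y" using k1(2) Y(3) by (metis insert_absorb not_le)
      have cY: "card Y + 1 = k" using k1(1) Y(1,3) xY by simp
      have "\<not> sep F A B Y" using less.prems(5) Y(1,3) by auto
      then obtain a b where ab: "a \<in> A" "b \<in> B" "reach F Y a b" unfolding sep_def by blast
      have eY: "e \<inter> Y = {}" using xy xY yY by auto
      have fz: "Fz F Y = insert e (Fz G Y)" unfolding Fz_def G_def using eF eY by auto
      have aY: "a \<notin> Y" and "(adj (insert e (Fz G Y)))\<^sup>*\<^sup>* a b"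
        using ab(3) fz unfolding reach_def by auto
      from rt_split[OF this(2) xy(1)]
      have cases: "(adj (Fz G Y))\<^sup>*\<^sup>* a b \<or> ((adj (Fz G Y))\<^sup>*\<^sup>* a x \<and> (adj (Fz G Y))\<^sup>*\<^sup>* y b) \<or>
          ((adj (Fz G Y))\<^sup>*\<^sup>* a y \<and> (adj (Fz G Y))\<^sup>*\<^sup>* x b)" .
      have eF1: "{x, y} \<in> F" "{y, x} \<in> F" using eF xy by (auto simp: insert_commute)
      from cases show ?thesis
      proof (elim disjE conjE)
        assume "(adj (Fz G Y))\<^sup>*\<^sup>* a b"
        hence "reach G Y a b" using aY unfolding reach_def by simp
        thus ?thesis using Y(2) ab(1,2) unfolding sep_def by blast
      next
        assume r1: "(adj (Fz G Y))\<^sup>*\<^sup>* a x" and r2: "(adj (Fz G Y))\<^sup>*\<^sup>* y b"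
        have ra: "reach G Y a x" using r1 aY unfolding reach_def by simp
        have rb: "reach G Y y b" using r2 yY unfolding reach_def by simp
        have noA: "\<forall>a'\<in>A. \<not> reach G Y a' y"
        proof (intro ballI notI)
          fix a' assume "a' \<in> A" and h: "reach G Y a' y"
          have "reach G Y a' b" by (rule reach_trans[OF h rb])
          thus False using Y(2) \<open>a' \<in> A\<close> ab(2) unfolding sep_def by blast
        qed
        have noB: "\<forall>b'\<in>B. \<not> reach G Y x b'"
        proof (intro ballI notI)
          fix b' assume "b' \<in> B" and h: "reach G Y x b'"
          have "reach G Y a b'" by (rule reach_trans[OF ra h])
          thus False using Y(2) \<open>b' \<in> B\<close> ab(1) unfolding sep_def by blast
        qed
        show ?thesis using orient_case[OF IH G1 eF1(1) xy(2) Y(1) xY yY cY Y(2) less.prems(3,4,5) noA noB] .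
      next
        assume r1: "(adj (Fz G Y))\<^sup>*\<^sup>* a y" and r2: "(adj (Fz G Y))\<^sup>*\<^sup>* x b"
        have ra: "reach G Y a y" using r1 aY unfolding reach_def by simp
        have rb: "reach G Y x b" using r2 xY unfolding reach_def by simp
        have noA: "\<forall>a'\<in>A. \<not> reach G Y a' x"
        proof (intro ballI notI)
          fix a' assume "a' \<in> A" and h: "reach G Y a' x"
          have "reach G Y a' b" by (rule reach_trans[OF h rb])
          thus False using Y(2) \<open>a' \<in> A\<close> ab(2) unfolding sep_def by blast
        qed
        have noB: "\<forall>b'\<in>B. \<not> reach G Y y b'"
        proof (intro ballI notI)
          fix b' assume "b' \<in> B" and h: "reach G Y y b'"
          have "reach G Y a b'" by (rule reach_trans[OF ra h])
          thus False using Y(2) \<open>b' \<in> B\<close> ab(1) unfolding sep_def by blast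
        qed
        show ?thesis using orient_case[OF IH G2 eF1(2) xy(2)[symmetric] Y(1) yY xY cY Y(2) less.prems(3,4,5) noA noB] .
      qed
    qed
  qed
qed

lemma succ_vertex:
  assumes "successively (adj F) p" "z \<in> set p"
  shows "z = hd p \<or> (\<exists>f\<in>F. z \<in> f)"
  using assms
proof (induction p)
  case Nil thus ?case by simp
next
  case (Cons a p)
  show ?case
  proof (cases "z = a")
    case True thus ?thesis by simp
  next
    case False
    hence zp: "z \<in> set p" using Cons.prems(2) by simp
    hence pne: "p \<noteq> []" by auto
    have s: "adj F a (hd p)" "successively (adj F) p" using Cons.prems(1) pne
      by (auto simp: successively_Cons)
    from Cons.IH[OF s(2) zp] show ?thesis
    proof
      assume "z = hd p"
      hence "z \<in> {a, hd p}" by simp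
      moreover have "{a, hd p} \<in> F" using s(1) unfolding adj_def by simp
      ultimately show ?thesis by blast
    qed blast
  qed
qed

lemma nth_notin_take: "distinct xs \<Longrightarrow> i < length xs \<Longrightarrow> xs ! i \<notin> set (take i xs)"
proof
  assume d: "distinct xs" and i: "i < length xs" and m: "xs ! i \<in> set (take i xs)"
  then obtain j where j: "j < length (take i xs)" "take i xs ! j = xs ! i" by (metis in_set_conv_nth)
  hence ji: "j < i" "xs ! j = xs ! i" by auto
  have jl: "j < length xs" using ji(1) i by simp
  have "j = i" using nth_eq_iff_index_eq[OF d jl i] ji(2) by simp
  thus False using ji(1) by simp
qed

lemma separator_exists:
  assumes HV: "H \<subseteq> all_edges V" and finV: "finite V" and uv: "u \<noteq> v" "u \<in> V" "v \<in> V"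
    and nuv: "{u, v} \<notin> H" and k1: "1 \<le> k"
    and amd: "at_most_disjoint_paths H u v (k - 1)"
  shows "\<exists>Z. finite Z \<and> sep (Fz H {u, v}) {a. {u, a} \<in> H} {b. {v, b} \<in> H} Z \<and> card Z < k"
proof (rule ccontr)
  assume "\<not> ?thesis"
  hence hyp: "\<forall>Z. finite Z \<and> sep (Fz H {u, v}) {a. {u, a} \<in> H} {b. {v, b} \<in> H} Z \<longrightarrow> k \<le> card Z"
    by (meson not_le)
  let ?H' = "Fz H {u, v}" and ?A = "{a. {u, a} \<in> H}" and ?B = "{b. {v, b} \<in> H}"
  have finE: "finite (all_edges V)" by (rule finite_all_edges[OF finV])
  have finH: "finite H" using HV finE by (rule finite_subset)
  have H'H: "?H' \<subseteq> H" unfolding Fz_def by blast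
  have finH': "finite ?H'" using H'H finH by (rule finite_subset)
  have c2: "\<forall>e\<in>?H'. card e = 2" using H'H HV unfolding all_edges_def by blast
  have AV: "?A \<subseteq> V" using HV unfolding all_edges_def by auto
  have BV: "?B \<subseteq> V" using HV unfolding all_edges_def by auto
  have finA: "finite ?A" using AV finV by (rule finite_subset)
  have finB: "finite ?B" using BV finV by (rule finite_subset)
  obtain P where P: "dfam ?H' ?A ?B k P" using menger[OF finH' c2 finA finB hyp] by blast
  have ap: "\<And>p. p \<in> P \<Longrightarrow> apath ?H' ?A ?B p" and dis: "\<forall>p\<in>P. \<forall>q\<in>P. p \<noteq> q \<longrightarrow> set p \<inter> set q = {}"
    and finP: "finite P" and cP: "card P = k" using P unfolding dfam_def by auto
  have notuv: "z \<noteq> u \<and> z \<noteq> v" if pP: "p \<in> P" and z: "z \<in> set p" for p z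
  proof -
    have a: "apath ?H' ?A ?B p" by (rule ap[OF pP])
    have s: "successively (adj ?H') p" and hA: "hd p \<in> ?A" using a unfolding apath_def by auto
    from succ_vertex[OF s z] show ?thesis
    proof
      assume zh: "z = hd p"
      have "{u, z} \<in> H" using hA zh by simp
      hence "card {u, z} = 2" using HV unfolding all_edges_def by blast
      hence "z \<noteq> u" using card2_neq by metis
      moreover have "z \<noteq> v" using \<open>{u, z} \<in> H\<close> nuv by auto
      ultimately show ?thesis by simp
    next
      assume "\<exists>f\<in>?H'. z \<in> f"
      then obtain f where "f \<in> ?H'" "z \<in> f" by blast
      thus ?thesis unfolding Fz_def by auto
    qed
  qed
  define g where "g p = u # p @ [v]" for p :: "'a list"
  have ginj: "inj_on g P" unfolding g_def by (simp add: inj_on_def)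
  have gpath: "is_path H u v (g p)" if pP: "p \<in> P" for p
  proof -
    have a: "apath ?H' ?A ?B p" by (rule ap[OF pP])
    have ne: "p \<noteq> []" and dp: "distinct p" and s: "successively (adj ?H') p"
      and hA: "hd p \<in> ?A" and lB: "last p \<in> ?B" using a unfolding apath_def by auto
    have sH: "successively (adj H) p" using successively_adj_mono[OF s H'H] .
    have nu: "u \<notin> set p" "v \<notin> set p" using notuv[OF pP] by auto
    have a1: "adj H u (hd p)" using hA nu ne unfolding adj_def by (metis hd_in_set mem_Collect_eq)
    have a2: "adj H (last p) v" using lB nu ne unfolding adj_def
      by (metis insert_commute last_in_set mem_Collect_eq)
    have sg: "successively (adj H) (g p)" unfolding g_def
      using a1 a2 sH ne by (simp add: successively_append_iff successively_Cons)
    have "\<forall>i. Suc i < length (g p) \<longrightarrow> adj H (g p ! i) (g p ! Suc i)"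
      using sg unfolding successively_conv_nth .
    hence ed: "\<forall>i. Suc i < length (g p) \<longrightarrow> {g p ! i, g p ! Suc i} \<in> H" unfolding adj_def by blast
    have dg: "distinct (g p)" unfolding g_def using dp nu uv(1) by auto
    show ?thesis unfolding is_path_def using ed dg by (simp add: g_def)
  qed
  have gint: "internal (g p) = set p" for p unfolding g_def internal_def by simp
  have "int_disjoint_paths H u v (g ` P)" unfolding int_disjoint_paths_def
  proof (intro conjI ballI impI)
    fix p assume "p \<in> g ` P" thus "is_path H u v p" using gpath by blast
  next
    fix p q assume pq: "p \<in> g ` P" "q \<in> g ` P" "p \<noteq> q"
    then obtain p0 q0 where "p0 \<in> P" "q0 \<in> P" "p = g p0" "q = g q0" by blast
    moreover hence "p0 \<noteq> q0" using pq(3) by blast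
    ultimately show "internal p \<inter> internal q = {}" using dis gint by simp
  qed
  moreover have "finite (g ` P)" using finP by simp
  ultimately have "card (g ` P) \<le> k - 1" using amd unfolding at_most_disjoint_paths_def by blast
  moreover have "card (g ` P) = k" using card_image[OF ginj] cP by simp
  ultimately show False using k1 by simp
qed

lemma no_walk:
  assumes HV: "H \<subseteq> all_edges V" and uv: "u \<noteq> v" and nuv: "{u, v} \<notin> H"
    and sepZ: "sep (Fz H {u, v}) {a. {u, a} \<in> H} {b. {v, b} \<in> H} Z"
    and ZX: "Z \<inter> (V - {u, v}) \<subseteq> X"
  shows "\<not> (adj (Fz H X))\<^sup>*\<^sup>* u v"
proof
  let ?H' = "Fz H {u, v}" and ?A = "{a. {u, a} \<in> H}" and ?B = "{b. {v, b} \<in> H}"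
  assume r: "(adj (Fz H X))\<^sup>*\<^sup>* u v"
  have inv: "t = u \<or> (\<exists>a\<in>?A. reach ?H' Z a t \<and> t \<noteq> u \<and> t \<noteq> v)"
    if "(adj (Fz H X))\<^sup>*\<^sup>* u t" for t
    using that
  proof (induction rule: rtranclp_induct)
    case base thus ?case by simp
  next
    case (step t t')
    have tt: "t \<noteq> t'" "{t, t'} \<in> H" "{t, t'} \<inter> X = {}" using step.hyps(2) unfolding adj_def Fz_def by auto
    have tV: "t \<in> V" "t' \<in> V" using tt(2) HV unfolding all_edges_def by auto
    from step.IH show ?case
    proof
      assume tu: "t = u"
      have t'v: "t' \<noteq> v" using tt(2) nuv tu by auto
      have t'A: "t' \<in> ?A" using tt(2) tu by simp
      have "t' \<notin> Z" using ZX tt(1,3) tV(2) t'v tu by blast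
      hence "reach ?H' Z t' t'" by (rule reach_refl)
      thus ?case using t'A t'v tt(1) tu by blast
    next
      assume "\<exists>a\<in>?A. reach ?H' Z a t \<and> t \<noteq> u \<and> t \<noteq> v"
      then obtain a where a: "a \<in> ?A" "reach ?H' Z a t" "t \<noteq> u" "t \<noteq> v" by blast
      show ?case
      proof (cases "t' = u")
        case True thus ?thesis by simp
      next
        case t'u: False
        show ?thesis
        proof (cases "t' = v")
          case True
          hence "t \<in> ?B" using tt(2) by (simp add: insert_commute)
          hence False using sepZ a(1,2) unfolding sep_def by blast
          thus ?thesis ..
        next
          case t'v: False
          have "{t, t'} \<in> ?H'" using tt(2) a(3,4) t'u t'v unfolding Fz_def by auto
          hence adjH': "adj ?H' t t'" using tt(1) unfolding adj_def by simp
          have "t \<notin> Z" using reach_notin[OF a(2)] .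
          moreover have "t' \<notin> Z" using ZX tt(3) tV(2) t'u t'v by blast
          ultimately have "{t, t'} \<inter> Z = {}" by blast
          hence "reach ?H' Z a t'" by (rule reach_step[OF a(2) adjH'])
          thus ?thesis using a(1) t'u t'v by blast
        qed
      qed
    qed
  qed
  from inv[OF r] uv show False by blast
qed

theorem part2:
  assumes finV: "finite V" and cV: "card V \<ge> 2" and k1: "1 \<le> k" and kV: "k \<le> card V - 1"
    and EV: "E \<subseteq> all_edges V" and kc: "k_constructible k V E"
  shows "\<exists>w. distinct_pos_weights V w \<and> E \<subseteq> M k V w"
proof -
  obtain es where es: "distinct es" "set es = E"
    and cond: "\<forall>i < length es. \<forall>u v. es ! i = {u, v} \<and> u \<noteq> v \<longrightarrow>
        at_most_disjoint_paths (set (take i es)) u v (k - 1)"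
    using kc unfolding k_constructible_def by blast
  have finE: "finite (all_edges V)" by (rule finite_all_edges[OF finV])
  obtain rs where rs: "set rs = all_edges V - E" "distinct rs"
    using finite_distinct_list[of "all_edges V - E"] finE by blast
  define full where "full = es @ rs"
  have dfull: "distinct full" unfolding full_def using es rs by auto
  have setfull: "set full = all_edges V" unfolding full_def using es rs EV by auto
  define idx where "idx f = the_inv_into {..<length full} (nth full) f" for f
  have injn: "inj_on (nth full) {..<length full}" using dfull by (simp add: inj_on_nth)
  have imn: "nth full ` {..<length full} = set full" by (auto simp: set_conv_nth)
  have idx1: "idx f < length full" "full ! idx f = f" if "f \<in> set full" for f
  proof -
    have "f \<in> nth full ` {..<length full}" using that imn by simp
    thus "idx f < length full" "full ! idx f = f" unfolding idx_def
      using the_inv_into_into[OF injn] f_the_inv_into_f[OF injn] by auto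
  qed
  have idx2: "idx (full ! j) = j" if "j < length full" for j
    unfolding idx_def using the_inv_into_f_f[OF injn] that by simp
  define w where "w f = real (idx f) + 1" for f
  have dw: "distinct_pos_weights V w" unfolding distinct_pos_weights_def
  proof (intro conjI ballI)
    show "inj_on w (all_edges V)"
    proof (rule inj_onI)
      fix f g assume fg: "f \<in> all_edges V" "g \<in> all_edges V" "w f = w g"
      hence "idx f = idx g" unfolding w_def by simp
      thus "f = g" using idx1(2) fg(1,2) setfull by metis
    qed
    fix e show "0 < w e" unfolding w_def by simp
  qed
  have "E \<subseteq> M k V w"
  proof
    fix e assume eE: "e \<in> E"
    then obtain i where i: "i < length es" "es ! i = e" using es(2) by (metis in_set_conv_nth)
    have eV: "e \<in> all_edges V" using eE EV by blast
    then obtain u v where uv: "u \<noteq> v" "e = {u, v}" "u \<in> V" "v \<in> V" using all_edges_pair by blast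
    define H where "H = set (take i es)"
    have HE: "H \<subseteq> E" unfolding H_def using es(2) by (meson set_take_subset)
    have HV: "H \<subseteq> all_edges V" using HE EV by blast
    have nuv: "{u, v} \<notin> H" unfolding H_def using nth_notin_take[OF es(1) i(1)] i(2) uv(2) by simp
    have amd: "at_most_disjoint_paths H u v (k - 1)" unfolding H_def using cond i uv by blast
    obtain Z where Z: "finite Z" "sep (Fz H {u, v}) {a. {u, a} \<in> H} {b. {v, b} \<in> H} Z" "card Z < k"
      using separator_exists[OF HV finV uv(1,3,4) nuv k1 amd] by blast
    define S where "S = V - {u, v}"
    have finS: "finite S" unfolding S_def using finV by simp
    have cS: "card S = card V - 2" unfolding S_def using uv finV by (simp add: card_Diff_subset)
    define Z0 where "Z0 = Z \<inter> S"
    have Z0S: "Z0 \<subseteq> S" unfolding Z0_def by blast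
    have finZ0: "finite Z0" using Z0S finS by (rule finite_subset)
    have cZ0: "card Z0 \<le> k - 1" using card_mono[OF Z(1), of Z0] Z(3) unfolding Z0_def by auto
    have "card (S - Z0) = card S - card Z0" using Z0S finZ0 by (simp add: card_Diff_subset)
    hence "k - 1 - card Z0 \<le> card (S - Z0)" using cS kV cZ0 by simp
    then obtain T where T: "T \<subseteq> S - Z0" "card T = k - 1 - card Z0" "finite T"
      by (rule obtain_subset_with_card_n)
    define X where "X = Z0 \<union> T"
    have XS: "X \<subseteq> S" unfolding X_def using Z0S T(1) by blast
    have XV: "X \<subseteq> V" using XS unfolding S_def by blast
    have cX: "card X = k - 1" unfolding X_def using T finZ0 cZ0
      by (subst card_Un_disjoint) auto
    have ZX: "Z \<inter> (V - {u, v}) \<subseteq> X" unfolding X_def Z0_def S_def by blast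
    have nw: "\<not> (adj (Fz H X))\<^sup>*\<^sup>* u v" by (rule no_walk[OF HV uv(1) nuv Z(2) ZX])
    have uvX: "u \<notin> X" "v \<notin> X" using XS unfolding S_def by auto
    have we: "idx e = i"
    proof -
      have "full ! i = e" unfolding full_def using i by (simp add: nth_append)
      moreover have "i < length full" unfolding full_def using i by simp
      ultimately show ?thesis using idx2 by metis
    qed
    have lightsub: "light w (V - X) e \<subseteq> Fz H X"
    proof
      fix f assume f: "f \<in> light w (V - X) e"
      hence fVX: "f \<in> all_edges (V - X)" and wf: "w f < w e" unfolding light_def by auto
      have fV: "f \<in> all_edges V" using fVX all_edges_mono[of "V - X" V] by blast
      have fi: "idx f < i" using wf we unfolding w_def by simp
      have ff: "full ! idx f = f" using idx1(2) fV setfull by simp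
      have "full ! idx f = es ! idx f" unfolding full_def using fi i(1) by (simp add: nth_append)
      hence "f = take i es ! idx f" using ff fi by simp
      moreover have "idx f < length (take i es)" using fi i(1) by simp
      ultimately have "f \<in> H" unfolding H_def by (metis nth_mem)
      moreover have "f \<inter> X = {}" using fVX unfolding all_edges_def by blast
      ultimately show "f \<in> Fz H X" unfolding Fz_def by simp
    qed
    have eVX: "e \<in> all_edges (V - X)" unfolding uv(2) using uv uvX by (intro pair_all_edges) auto
    have eL: "e \<in> Lset w (V - X)" unfolding Lset_def
    proof (intro CollectI conjI allI impI eVX notI)
      fix a b assume ab: "e = {a, b}" and r: "(adj (light w (V - X) e))\<^sup>*\<^sup>* a b"
      have r2: "(adj (Fz H X))\<^sup>*\<^sup>* a b" by (rule rt_mono[OF lightsub r])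
      have "{a, b} = {u, v}" using ab uv(2) by simp
      hence "(a = u \<and> b = v) \<or> (a = v \<and> b = u)" by (simp only: doubleton_eq_iff)
      thus False using r2 nw rt_sym by metis
    qed
    have "MST w (V - X) = Lset w (V - X)" using MST_sub(1)[OF finV dw] by blast
    hence "e \<in> MST w (V - X)" using eL by simp
    thus "e \<in> M k V w" unfolding M_def using XV cX by blast
  qed
  thus ?thesis using dw by blast
qed

theorem theorem5:
  fixes V :: "'a set" and k :: nat
  assumes "finite V" and "card V \<ge> 2" and "1 \<le> k" and "k \<le> card V - 1"
  shows "(\<forall>w. distinct_pos_weights V w \<longrightarrow> k_constructible k V (M k V w)) \<and>
         (\<forall>E. E \<subseteq> all_edges V \<and> k_constructible k V E \<longrightarrow>
              (\<exists>w. distinct_pos_weights V w \<and> E \<subseteq> M k V w))"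
proof (intro conjI allI impI)
  fix w assume "distinct_pos_weights V w"
  thus "k_constructible k V (M k V w)" by (rule part1[OF assms(1)])
next
  fix E assume h: "E \<subseteq> all_edges V \<and> k_constructible k V E"
  show "\<exists>w. distinct_pos_weights V w \<and> E \<subseteq> M k V w"
    using part2[OF assms(1-4) conjunct1[OF h] conjunct2[OF h]] .
qed

end
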